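(* Let $d\ge 1$ and $p\in[0,1]$ with $p_d=\frac{2d+1}{4d}<p\le 1$, let $(S_n)$ be the $d$-dimensional elephant random walk with memory parameter $p$ described in the context, let $a=\frac{2dp-1}{2d-1}$, and let $L$ be the almost sure limit of $n^{-a}S_n$ as $n\to\infty$ (this limit exists and $n^{-a}S_n\to L$ also in mean square). Then $\mathbb{E}[L]=0$ and $$\mathbb{E}[LL^T]=\frac{1}{d(2a-1)\Gamma(2a)}I_d;$$ in particular $$\mathbb{E}[\|L\|^2]=\frac{1}{(2a-1)\Gamma(2a)}.$$
   Context: Multi-dimensional elephant random walk (MERW). Fix a dimension $d\ge1$ and a memory parameter $p\in[0,1]$. Let $(e_1,\dots,e_d)$ be the standard basis of $\mathbb{R}^d$, $I_d$ the $d\times d$ identity matrix, and $J_d$ the $d\times d$ cyclic permutation matrix with entries $(J_d)_{i,i+1}=1$ for $1\le i\le d-1$, $(J_d)_{d,1}=1$, and all other entries $0$. Set $S_0=0$. The first step $X_1$ is uniformly distributed on $\{\pm e_1,\dots,\pm e_d\}$. For $n\ge1$, given $\mathcal{F}_n=\sigma(X_1,\dots,X_n)$, $X_{n+1}=A_nX_{b_n}$, where $b_n$ is uniform on $\{1,\dots,n\}$ and $A_n$ is a random matrix, with $b_n$, $A_n$ independent of each other and of $\mathcal{F}_n$, equal to $I_d$ with probability $p$ and to each of $-I_d,\ \pm J_d,\dots,\pm J_d^{d-1}$ with probability $\frac{1-p}{2d-1}$. The position is $S_n=X_1+\dots+X_n$. $\Gamma$ is the Euler Gamma function. *)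

theory Defs
  imports "HOL-Probability.Probability"
begin

text \<open>Vectors of R^d are represented as functions nat => real (coordinates 0..d-1,
  0-indexed), d x d matrices as functions nat => nat => real.\<close>

definition unit_vec :: "nat \<Rightarrow> nat \<Rightarrow> real" where
  "unit_vec i = (\<lambda>j. if j = i then 1 else 0)"

definition idm :: "nat \<Rightarrow> nat \<Rightarrow> nat \<Rightarrow> real" where
  "idm d = (\<lambda>i j. if i < d \<and> j = i then 1 else 0)"

text \<open>Cyclic permutation matrix: (J)_{i,i+1} = 1, (J)_{d,1} = 1 (1-indexed), i.e.
  0-indexed entry (i, (i+1) mod d) equals 1.\<close>
definition Jmat :: "nat \<Rightarrow> nat \<Rightarrow> nat \<Rightarrow> real" where
  "Jmat d = (\<lambda>i j. if i < d \<and> j < d \<and> j = Suc i mod d then 1 else 0)"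

definition mat_mul :: "nat \<Rightarrow> (nat \<Rightarrow> nat \<Rightarrow> real) \<Rightarrow> (nat \<Rightarrow> nat \<Rightarrow> real) \<Rightarrow> nat \<Rightarrow> nat \<Rightarrow> real" where
  "mat_mul d A B = (\<lambda>i j. \<Sum>k<d. A i k * B k j)"

fun mat_pow :: "nat \<Rightarrow> (nat \<Rightarrow> nat \<Rightarrow> real) \<Rightarrow> nat \<Rightarrow> nat \<Rightarrow> nat \<Rightarrow> real" where
  "mat_pow d A 0 = idm d"
| "mat_pow d A (Suc k) = mat_mul d (mat_pow d A k) A"

definition mat_vec :: "nat \<Rightarrow> (nat \<Rightarrow> nat \<Rightarrow> real) \<Rightarrow> (nat \<Rightarrow> real) \<Rightarrow> nat \<Rightarrow> real" where
  "mat_vec d A x = (\<lambda>i. \<Sum>j<d. A i j * x j)"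

text \<open>Index set of the 2d-1 matrices other than I: (s,k) stands for (+/-) J^k,
  s = True meaning +.  These are -I = (False,0) and (s,k) with 1 <= k <= d-1.\<close>
definition other_idx :: "nat \<Rightarrow> (bool \<times> nat) set" where
  "other_idx d = {(False, 0)} \<union> {(s, k). 1 \<le> k \<and> k < d}"

definition signed_Jpow :: "nat \<Rightarrow> bool \<times> nat \<Rightarrow> nat \<Rightarrow> nat \<Rightarrow> real" where
  "signed_Jpow d sk = (\<lambda>i j. (if fst sk then 1 else -1) * mat_pow d (Jmat d) (snd sk) i j)"

definition A_pmf :: "nat \<Rightarrow> real \<Rightarrow> (nat \<Rightarrow> nat \<Rightarrow> real) pmf" where
  "A_pmf d p = bind_pmf (bernoulli_pmf p)
     (\<lambda>c. if c then return_pmf (idm d)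
          else map_pmf (signed_Jpow d) (pmf_of_set (other_idx d)))"

definition first_step_pmf :: "nat \<Rightarrow> (nat \<Rightarrow> real) pmf" where
  "first_step_pmf d = pmf_of_set {(\<lambda>j. c * unit_vec i j) | c i. c \<in> {1, -1} \<and> i < d}"

definition next_step_pmf :: "nat \<Rightarrow> real \<Rightarrow> (nat \<Rightarrow> real) list \<Rightarrow> (nat \<Rightarrow> real) pmf" where
  "next_step_pmf d p xs = bind_pmf (pmf_of_set {0..<length xs})
     (\<lambda>b. map_pmf (\<lambda>A. mat_vec d A (xs ! b)) (A_pmf d p))"

fun merw_pmf :: "nat \<Rightarrow> real \<Rightarrow> nat \<Rightarrow> (nat \<Rightarrow> real) list pmf" where
  "merw_pmf d p 0 = return_pmf []"
| "merw_pmf d p (Suc 0) = map_pmf (\<lambda>x. [x]) (first_step_pmf d)"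
| "merw_pmf d p (Suc (Suc n)) = bind_pmf (merw_pmf d p (Suc n))
      (\<lambda>xs. map_pmf (\<lambda>y. xs @ [y]) (next_step_pmf d p xs))"

text \<open>A process X (X k = k-th step, k >= 1) on the probability space M is a MERW
  if for every n the law of (X_1,...,X_n) is merw_pmf d p n.\<close>
definition is_MERW :: "'a measure \<Rightarrow> nat \<Rightarrow> real \<Rightarrow> (nat \<Rightarrow> 'a \<Rightarrow> nat \<Rightarrow> real) \<Rightarrow> bool" where
  "is_MERW M d p X \<longleftrightarrow>
     (\<forall>n. (\<lambda>\<omega>. map (\<lambda>k. X k \<omega>) [1..<Suc n]) \<in> measurable M (count_space UNIV)
        \<and> distr M (count_space UNIV) (\<lambda>\<omega>. map (\<lambda>k. X k \<omega>) [1..<Suc n])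
            = measure_pmf (merw_pmf d p n))"

definition merw_pos :: "(nat \<Rightarrow> 'a \<Rightarrow> nat \<Rightarrow> real) \<Rightarrow> nat \<Rightarrow> 'a \<Rightarrow> nat \<Rightarrow> real" where
  "merw_pos X n \<omega> = (\<lambda>i. \<Sum>k\<in>{1..n}. X k \<omega> i)"

end

theory Submission
  imports Defs
begin

lemma integral_bind_pmf_fin:
  fixes f :: "'b \<Rightarrow> real"
  assumes N: "finite (set_pmf N)" and F: "\<And>x. x \<in> set_pmf N \<Longrightarrow> finite (set_pmf (F x))"
  shows "(\<integral>y. f y \<partial>measure_pmf (bind_pmf N F)) = (\<integral>x. (\<integral>y. f y \<partial>measure_pmf (F x)) \<partial>measure_pmf N)"
proof -
  define A where "A = (\<Union>x\<in>set_pmf N. set_pmf (F x))"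
  have fA: "finite A" unfolding A_def using N F by (subst finite_UN) auto
  have "(\<integral>y. f y \<partial>measure_pmf (bind_pmf N F)) = (\<Sum>a\<in>A. f a * pmf (bind_pmf N F) a)"
    by (rule integral_measure_pmf_real[OF fA]) (auto simp: A_def)
  also have "\<dots> = (\<Sum>a\<in>A. (\<integral>x. f a * pmf (F x) a \<partial>measure_pmf N))"
    by (simp add: pmf_bind)
  also have "\<dots> = (\<integral>x. (\<Sum>a\<in>A. f a * pmf (F x) a) \<partial>measure_pmf N)"
    by (subst Bochner_Integration.integral_sum) (auto simp: integrable_measure_pmf_finite[OF N])
  also have "\<dots> = (\<integral>x. (\<integral>y. f y \<partial>measure_pmf (F x)) \<partial>measure_pmf N)"
  proof (rule integral_cong_AE)
    show "AE x in measure_pmf N. (\<Sum>a\<in>A. f a * pmf (F x) a) = (\<integral>y. f y \<partial>measure_pmf (F x))"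
      using AE_measure_pmf[of N]
    proof (rule AE_mp)
      show "AE x in measure_pmf N. x \<in> set_pmf N \<longrightarrow> (\<Sum>a\<in>A. f a * pmf (F x) a) = (\<integral>y. f y \<partial>measure_pmf (F x))"
        by (intro AE_I2 impI, rule integral_measure_pmf_real[OF fA, symmetric]) (auto simp: A_def)
    qed
  qed auto
  finally show ?thesis .
qed

lemma mat_pow_J:
  assumes "d \<ge> 1"
  shows "mat_pow d (Jmat d) k i j = (if i < d \<and> j < d \<and> j = (i + k) mod d then 1 else 0)"
proof (induction k arbitrary: j)
  case 0 show ?case by (auto simp: idm_def)
next
  case (Suc k)
  have J: "\<And>l. Jmat d l j = (if l < d \<and> j < d \<and> j = Suc l mod d then 1 else 0)" by (simp add: Jmat_def)
  have "mat_pow d (Jmat d) (Suc k) i j = (\<Sum>l<d. mat_pow d (Jmat d) k i l * Jmat d l j)"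
    by (simp add: mat_mul_def)
  also have "\<dots> = (\<Sum>l<d. if l = (i+k) mod d then (if i < d \<and> j < d \<and> j = Suc l mod d then 1 else 0) else 0)"
    by (intro sum.cong refl) (auto simp: Suc.IH J)
  also have "\<dots> = (if i < d \<and> j < d \<and> j = Suc ((i+k) mod d) mod d then 1 else 0)"
    by (subst sum.delta) (use assms in auto)
  also have "Suc ((i+k) mod d) mod d = (i + Suc k) mod d" by (simp add: mod_Suc_eq)
  finally show ?case .
qed

lemma mat_vec_Jpow:
  assumes "d \<ge> 1"
  shows "mat_vec d (mat_pow d (Jmat d) k) x i = (if i < d then x ((i + k) mod d) else 0)"
proof -
  have "mat_vec d (mat_pow d (Jmat d) k) x i = (\<Sum>j<d. if j = (i + k) mod d then (if i < d then x j else 0) else 0)"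
    unfolding mat_vec_def using assms by (intro sum.cong refl) (auto simp: mat_pow_J)
  also have "\<dots> = (if i < d then x ((i + k) mod d) else 0)"
    by (subst sum.delta) (use assms in auto)
  finally show ?thesis .
qed

lemma mat_vec_idm: "mat_vec d (idm d) x i = (if i < d then x i else 0)"
proof -
  have "mat_vec d (idm d) x i = (\<Sum>j<d. if j = i then (if i < d then x j else 0) else 0)"
    unfolding mat_vec_def idm_def by (intro sum.cong refl) auto
  also have "\<dots> = (if i < d then x i else 0)" by (subst sum.delta) auto
  finally show ?thesis .
qed

lemma mat_vec_signed:
  assumes "d \<ge> 1"
  shows "mat_vec d (signed_Jpow d sk) x i = (if fst sk then 1 else -1) * (if i < d then x ((i + snd sk) mod d) else 0)"
proof -
  have "mat_vec d (signed_Jpow d sk) x i = (if fst sk then 1 else -1) * mat_vec d (mat_pow d (Jmat d) (snd sk)) x i"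
    unfolding mat_vec_def signed_Jpow_def by (simp add: sum_distrib_left mult.assoc)
  then show ?thesis using mat_vec_Jpow[OF assms] by simp
qed

lemma other_idx_eq: "other_idx d = insert (False,0) (Pair True ` {1..<d} \<union> Pair False ` {1..<d})"
  unfolding other_idx_def by auto

lemma finite_other: "finite (other_idx d)" and other_ne: "other_idx d \<noteq> {}"
  unfolding other_idx_eq by auto

lemma sum_other:
  "(\<Sum>sk\<in>other_idx d. f sk) = f (False,0) + (\<Sum>k\<in>{1..<d}. f (True,k) + f (False,k))"
proof -
  have "(\<Sum>sk\<in>other_idx d. f sk) = f (False,0) + (\<Sum>sk\<in>Pair True ` {1..<d} \<union> Pair False ` {1..<d}. f sk)"
    unfolding other_idx_eq by (subst sum.insert) auto
  also have "(\<Sum>sk\<in>Pair True ` {1..<d} \<union> Pair False ` {1..<d}. f sk)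
     = (\<Sum>sk\<in>Pair True ` {1..<d}. f sk) + (\<Sum>sk\<in>Pair False ` {1..<d}. f sk)"
    by (rule sum.union_disjoint) auto
  also have "\<dots> = (\<Sum>k\<in>{1..<d}. f (True,k)) + (\<Sum>k\<in>{1..<d}. f (False,k))"
    by (simp add: sum.reindex inj_on_def)
  finally show ?thesis by (simp add: sum.distrib)
qed

lemma card_other: "d \<ge> 1 \<Longrightarrow> card (other_idx d) = 2 * d - 1"
proof -
  assume d: "d \<ge> 1"
  have "card (other_idx d) = (\<Sum>sk\<in>other_idx d. (1::nat))" by simp
  also have "\<dots> = 1 + (\<Sum>k\<in>{1..<d}. 2)" by (subst sum_other) simp
  also have "\<dots> = 2 * d - 1" using d by simp
  finally show ?thesis .
qed

definition good :: "(nat \<Rightarrow> real) \<Rightarrow> bool" where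
  "good x \<longleftrightarrow> (\<forall>i j. i \<noteq> j \<longrightarrow> x i * x j = 0)"

lemma finite_set_bernoulli: "finite (set_pmf (bernoulli_pmf q))"
  by (rule finite_subset[of _ UNIV]) auto

lemma set_A: "d \<ge> 1 \<Longrightarrow> set_pmf (A_pmf d p) \<subseteq> insert (idm d) (signed_Jpow d ` other_idx d)"
  unfolding A_pmf_def by (auto simp: set_pmf_of_set[OF other_ne finite_other] split: if_splits)

lemma finite_set_A: "d \<ge> 1 \<Longrightarrow> finite (set_pmf (A_pmf d p))"
  by (rule finite_subset[OF set_A]) (auto simp: finite_other)

lemma A_integral:
  assumes "0 \<le> p" "p \<le> 1" "d \<ge> 1"
  shows "(\<integral>A. phi A \<partial>measure_pmf (A_pmf d p)) =
     p * phi (idm d) + (1 - p) * (\<Sum>sk\<in>other_idx d. phi (signed_Jpow d sk)) / (2 * real d - 1)"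
proof -
  have "(\<integral>A. phi A \<partial>measure_pmf (A_pmf d p)) =
     (\<integral>c. (\<integral>A. phi A \<partial>measure_pmf (if c then return_pmf (idm d)
          else map_pmf (signed_Jpow d) (pmf_of_set (other_idx d)))) \<partial>measure_pmf (bernoulli_pmf p))"
    unfolding A_pmf_def
    by (rule integral_bind_pmf_fin) (auto simp: finite_set_bernoulli set_pmf_of_set[OF other_ne finite_other] finite_other)
  also have "\<dots> = p * phi (idm d) + (1 - p) * (\<Sum>sk\<in>other_idx d. phi (signed_Jpow d sk)) / real (card (other_idx d))"
    using assms by (simp add: integral_bernoulli_pmf integral_pmf_of_set[OF other_ne finite_other] mult.commute)
  also have "real (card (other_idx d)) = 2 * real d - 1"
    using assms by (simp add: card_other of_nat_diff)
  finally show ?thesis .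
qed

lemma mod_cancel_small:
  fixes a k k' d :: nat
  assumes "(a + k) mod d = (a + k') mod d" "k < d" "k' < d"
  shows "k = k'"
proof -
  have "(int a + int k) mod int d = (int a + int k') mod int d"
    using assms(1) by (metis of_nat_add zmod_int)
  then have "int d dvd (int a + int k) - (int a + int k')" by (simp add: mod_eq_dvd_iff)
  then have dv: "int d dvd (int k - int k')" by simp
  show ?thesis
  proof (rule ccontr)
    assume "k \<noteq> k'"
    then have "int k - int k' \<noteq> 0" by simp
    from dvd_imp_le_int[OF this dv] assms(2,3) show False by simp
  qed
qed

lemma rot_sum:
  fixes f :: "nat \<Rightarrow> real"
  assumes "i < d"
  shows "(\<Sum>k\<in>{1..<d}. f ((i + k) mod d)) = (\<Sum>l<d. f l) - f i"
proof -
  have inj: "inj_on (\<lambda>k. (i + k) mod d) {..<d}"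
  proof (rule inj_onI)
    fix k k' assume k: "k \<in> {..<d}" "k' \<in> {..<d}" and e: "(i + k) mod d = (i + k') mod d"
    from mod_cancel_small[OF e] k show "k = k'" by simp
  qed
  have img: "(\<lambda>k. (i + k) mod d) ` {..<d} = {..<d}"
    by (rule endo_inj_surj[OF _ _ inj]) (use assms in auto)
  have e1: "(\<Sum>l<d. f l) = (\<Sum>k<d. f ((i + k) mod d))"
    using sum.reindex[OF inj, of f] img by simp
  have e2: "{..<d} = insert 0 {1..<d}" using assms by auto
  have "(\<Sum>k<d. f ((i + k) mod d)) = f i + (\<Sum>k\<in>{1..<d}. f ((i + k) mod d))"
    unfolding e2 using assms by (subst sum.insert) auto
  then show ?thesis using e1 by simp
qed

lemma rot_inj:
  fixes i j k d :: nat
  assumes "i < d" "j < d" "(i + k) mod d = (j + k) mod d"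
  shows "i = j"
  using mod_cancel_small[of k i d j] assms by (simp add: add.commute)

context
  fixes d :: nat and p :: real
  assumes d: "d \<ge> 1" and p0: "0 \<le> p" and p1: "p \<le> 1"
begin

lemma A_lin:
  assumes "i < d"
  shows "(\<integral>A. mat_vec d A x i \<partial>measure_pmf (A_pmf d p)) = (2 * real d * p - 1) / (2 * real d - 1) * x i"
proof -
  have s: "(\<Sum>sk\<in>other_idx d. mat_vec d (signed_Jpow d sk) x i) = - x i"
    using assms by (simp add: sum_other mat_vec_signed[OF d])
  have "2 * real d - 1 > 0" using d by simp
  then show ?thesis
    using assms by (simp add: A_integral[OF p0 p1 d] s mat_vec_idm field_simps)
qed

lemma A_sq:
  assumes "i < d"
  shows "(\<integral>A. (mat_vec d A x i)\<^sup>2 \<partial>measure_pmf (A_pmf d p)) =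
     p * (x i)\<^sup>2 + (1 - p) / (2 * real d - 1) * (2 * (\<Sum>l<d. (x l)\<^sup>2) - (x i)\<^sup>2)"
proof -
  have "(\<Sum>sk\<in>other_idx d. (mat_vec d (signed_Jpow d sk) x i)\<^sup>2)
      = (x i)\<^sup>2 + (\<Sum>k\<in>{1..<d}. 2 * (x ((i + k) mod d))\<^sup>2)"
    using assms by (simp add: sum_other mat_vec_signed[OF d] power_mult_distrib)
  also have "\<dots> = 2 * (\<Sum>l<d. (x l)\<^sup>2) - (x i)\<^sup>2"
    using rot_sum[OF assms, of "\<lambda>l. (x l)\<^sup>2"] by (simp add: sum_distrib_left[symmetric])
  finally have s: "(\<Sum>sk\<in>other_idx d. (mat_vec d (signed_Jpow d sk) x i)\<^sup>2) = 2 * (\<Sum>l<d. (x l)\<^sup>2) - (x i)\<^sup>2" .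
  show ?thesis
    using assms by (simp add: A_integral[OF p0 p1 d] s mat_vec_idm)
qed

lemma A_cross:
  assumes "i < d" "j < d" "i \<noteq> j" "good x"
  shows "(\<integral>A. mat_vec d A x i * mat_vec d A x j \<partial>measure_pmf (A_pmf d p)) = 0"
proof -
  have "mat_vec d (signed_Jpow d sk) x i * mat_vec d (signed_Jpow d sk) x j = 0" for sk
  proof -
    have "(i + snd sk) mod d \<noteq> (j + snd sk) mod d" using rot_inj[OF assms(1,2)] assms(3) by blast
    then have "x ((i + snd sk) mod d) * x ((j + snd sk) mod d) = 0" using assms(4) by (simp add: good_def)
    then show ?thesis using assms by (simp add: mat_vec_signed[OF d])
  qed
  then have z: "(\<Sum>sk\<in>other_idx d. mat_vec d (signed_Jpow d sk) x i * mat_vec d (signed_Jpow d sk) x j) = 0"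
    by (intro sum.neutral) blast
  have "x i * x j = 0" using assms by (simp add: good_def)
  then show ?thesis using assms by (simp add: A_integral[OF p0 p1 d] mat_vec_idm z)
qed

lemma good_A:
  assumes "good x" "A \<in> set_pmf (A_pmf d p)"
  shows "good (mat_vec d A x)"
  unfolding good_def
proof (intro allI impI)
  fix i j :: nat assume ij: "i \<noteq> j"
  show "mat_vec d A x i * mat_vec d A x j = 0"
  proof (cases "i < d \<and> j < d")
    case False
    then have "A \<in> insert (idm d) (signed_Jpow d ` other_idx d)" using set_A[OF d] assms(2) by blast
    then show ?thesis using False by (auto simp: mat_vec_idm mat_vec_signed[OF d])
  next
    case True
    have "A \<in> insert (idm d) (signed_Jpow d ` other_idx d)" using set_A[OF d] assms(2) by blast
    then show ?thesis
    proof
      assume "A = idm d"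
      moreover have "x i * x j = 0" using assms ij by (simp add: good_def)
      ultimately show ?thesis using True by (simp add: mat_vec_idm)
    next
      assume "A \<in> signed_Jpow d ` other_idx d"
      then obtain sk where A: "A = signed_Jpow d sk" by blast
      have "(i + snd sk) mod d \<noteq> (j + snd sk) mod d" using rot_inj True ij by blast
      then have "x ((i + snd sk) mod d) * x ((j + snd sk) mod d) = 0" using assms(1) by (simp add: good_def)
      then show ?thesis using True A by (simp add: mat_vec_signed[OF d])
    qed
  qed
qed

end

definition Sv :: "(nat \<Rightarrow> real) list \<Rightarrow> nat \<Rightarrow> real" where
  "Sv xs i = sum_list (map (\<lambda>x. x i) xs)"

lemma Sv_nth: "Sv xs i = (\<Sum>b<length xs. (xs ! b) i)"
  unfolding Sv_def by (simp add: sum_list_sum_nth atLeast0LessThan)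

lemma Sv_snoc[simp]: "Sv (xs @ [y]) i = Sv xs i + y i"
  unfolding Sv_def by simp

definition F1set :: "nat \<Rightarrow> (nat \<Rightarrow> real) set" where
  "F1set d = {(\<lambda>j. c * unit_vec i j) | c i. c \<in> {1, -1} \<and> i < d}"

lemma F1set_eq: "F1set d = (\<lambda>(c, m). \<lambda>j. c * unit_vec m j) ` ({1, -1} \<times> {..<d})"
  unfolding F1set_def by auto

lemma F1_inj: "inj_on (\<lambda>(c, m). \<lambda>j. c * unit_vec m j :: real) ({1, -1} \<times> {..<d})"
proof (rule inj_onI, clarify)
  fix c m c' m' :: "real" and mm mm' :: nat
  fix c c' :: real and m m' :: nat
  assume c: "c \<in> {1, -1}" "c' \<in> {1, -1}" and e: "(\<lambda>j. c * unit_vec m j) = (\<lambda>j. c' * unit_vec m' j)"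
  from fun_cong[OF e, of m] have "c = c' * unit_vec m' m" by (simp add: unit_vec_def)
  with c have mm: "m' = m" by (auto simp: unit_vec_def split: if_splits)
  with \<open>c = c' * unit_vec m' m\<close> have "c = c'" by (simp add: unit_vec_def)
  with mm show "c = c' \<and> m = m'" by simp
qed

lemma F1_finite: "finite (F1set d)" and F1_ne: "d \<ge> 1 \<Longrightarrow> F1set d \<noteq> {}"
  unfolding F1set_eq by (auto simp: lessThan_empty_iff)

lemma F1_card: "card (F1set d) = 2 * d"
  unfolding F1set_eq by (subst card_image[OF F1_inj]) (simp add: card_cartesian_product)

lemma F1_sum: "(\<Sum>x\<in>F1set d. f x) = (\<Sum>c\<in>{1, -1::real}. \<Sum>m<d. f (\<lambda>j. c * unit_vec m j))"
  unfolding F1set_eq by (subst sum.reindex[OF F1_inj]) (simp add: sum.cartesian_product case_prod_unfold)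

lemma first_eq: "first_step_pmf d = pmf_of_set (F1set d)"
  unfolding first_step_pmf_def F1set_def by simp

lemma good_unit: "good (\<lambda>j. c * unit_vec m j)"
  unfolding good_def unit_vec_def by auto

context
  fixes d :: nat and p :: real
  assumes d: "d \<ge> 1" and p0: "0 \<le> p" and p1: "p \<le> 1"
begin

lemma first_lin: "(\<integral>x. x i \<partial>measure_pmf (first_step_pmf d)) = 0"
  unfolding first_eq using d
  by (simp add: integral_pmf_of_set F1_finite F1_ne F1_sum sum_negf)

lemma first_sq:
  assumes "i < d" "j < d"
  shows "(\<integral>x. x i * x j \<partial>measure_pmf (first_step_pmf d)) = (if i = j then 1 / real d else 0)"
proof -
  have "(\<Sum>m<d. unit_vec m i * unit_vec m j) = (if i = j then 1 else 0)"
  proof -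
    have "(\<Sum>m<d. unit_vec m i * unit_vec m j) = (\<Sum>m<d. if m = i then (if i = j then 1 else 0) else 0)"
      by (intro sum.cong refl) (auto simp: unit_vec_def)
    also have "\<dots> = (if i = j then 1 else 0)" using assms by (subst sum.delta) auto
    finally show ?thesis .
  qed
  then show ?thesis unfolding first_eq using d
    by (simp add: integral_pmf_of_set F1_finite F1_ne F1_sum F1_card)
qed

lemma set_next:
  assumes "length xs \<ge> 1"
  shows "set_pmf (next_step_pmf d p xs) = (\<Union>b\<in>{0..<length xs}. (\<lambda>A. mat_vec d A (xs ! b)) ` set_pmf (A_pmf d p))"
proof -
  have "{0..<length xs} \<noteq> {}" using assms by auto
  then show ?thesis unfolding next_step_pmf_def by (simp add: set_pmf_of_set)
qed

lemma finite_next: "length xs \<ge> 1 \<Longrightarrow> finite (set_pmf (next_step_pmf d p xs))"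
  by (simp add: set_next finite_set_A[OF d])

lemma next_integral:
  assumes "length xs = n" "n \<ge> 1"
  shows "(\<integral>y. psi y \<partial>measure_pmf (next_step_pmf d p xs)) =
      (\<Sum>b<n. \<integral>A. psi (mat_vec d A (xs ! b)) \<partial>measure_pmf (A_pmf d p)) / real n"
proof -
  have "(\<integral>y. psi y \<partial>measure_pmf (next_step_pmf d p xs)) =
      (\<integral>b. (\<integral>y. psi y \<partial>measure_pmf (map_pmf (\<lambda>A. mat_vec d A (xs ! b)) (A_pmf d p))) \<partial>measure_pmf (pmf_of_set {0..<length xs}))"
    unfolding next_step_pmf_def
    by (rule integral_bind_pmf_fin) (use assms in \<open>auto simp: set_pmf_of_set finite_set_A[OF d]\<close>)
  also have "\<dots> = (\<Sum>b<n. \<integral>A. psi (mat_vec d A (xs ! b)) \<partial>measure_pmf (A_pmf d p)) / real n"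
    using assms by (simp add: integral_pmf_of_set atLeast0LessThan lessThan_empty_iff)
  finally show ?thesis .
qed

definition "aa = (2 * real d * p - 1) / (2 * real d - 1)"

lemma next_lin:
  assumes "length xs = n" "n \<ge> 1" "i < d"
  shows "(\<integral>y. y i \<partial>measure_pmf (next_step_pmf d p xs)) = aa / real n * Sv xs i"
proof -
  have "(\<integral>y. y i \<partial>measure_pmf (next_step_pmf d p xs)) = (\<Sum>b<n. aa * (xs ! b) i) / real n"
    using assms by (simp add: next_integral A_lin[OF d p0 p1] aa_def)
  also have "\<dots> = aa / real n * Sv xs i" using assms by (simp add: Sv_nth sum_distrib_left[symmetric])
  finally show ?thesis .
qed

lemma next_sq:
  assumes "length xs = n" "n \<ge> 1" "i < d"
  shows "(\<integral>y. (y i)\<^sup>2 \<partial>measure_pmf (next_step_pmf d p xs)) =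
     (\<Sum>b<n. p * ((xs ! b) i)\<^sup>2 + (1 - p) / (2 * real d - 1) * (2 * (\<Sum>l<d. ((xs ! b) l)\<^sup>2) - ((xs ! b) i)\<^sup>2)) / real n"
  using assms by (simp add: next_integral A_sq[OF d p0 p1])

lemma next_cross:
  assumes "length xs = n" "n \<ge> 1" "i < d" "j < d" "i \<noteq> j" "\<forall>x\<in>set xs. good x"
  shows "(\<integral>y. y i * y j \<partial>measure_pmf (next_step_pmf d p xs)) = 0"
proof -
  have "(\<integral>A. mat_vec d A (xs ! b) i * mat_vec d A (xs ! b) j \<partial>measure_pmf (A_pmf d p)) = 0" if "b < n" for b
    using that assms by (intro A_cross[OF d p0 p1]) auto
  then show ?thesis using assms by (simp add: next_integral)
qed

lemma merw_inv:
  "(\<forall>xs\<in>set_pmf (merw_pmf d p n). length xs = n \<and> (\<forall>x\<in>set xs. good x)) \<and> finite (set_pmf (merw_pmf d p n))"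
proof (cases n)
  case 0 then show ?thesis by simp
next
  case (Suc m)
  have "(\<forall>xs\<in>set_pmf (merw_pmf d p (Suc m)). length xs = Suc m \<and> (\<forall>x\<in>set xs. good x)) \<and> finite (set_pmf (merw_pmf d p (Suc m)))"
  proof (induction m)
    case 0
    have "set_pmf (merw_pmf d p (Suc 0)) = (\<lambda>x. [x]) ` F1set d"
      using d by (simp add: first_eq set_pmf_of_set F1_finite F1_ne)
    moreover have "\<forall>x\<in>F1set d. good x" by (auto simp: F1set_def good_def unit_vec_def)
    ultimately show ?case
      by (auto simp: F1_finite)
  next
    case (Suc m)
    have fin: "finite (set_pmf (merw_pmf d p (Suc (Suc m))))"
      using Suc.IH by (auto simp: finite_next)
    have "length xs = Suc (Suc m) \<and> (\<forall>x\<in>set xs. good x)" if xs: "xs \<in> set_pmf (merw_pmf d p (Suc (Suc m)))" for xs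
    proof -
      from xs obtain ys y where ys: "ys \<in> set_pmf (merw_pmf d p (Suc m))" and y: "y \<in> set_pmf (next_step_pmf d p ys)"
        and e: "xs = ys @ [y]" by auto
      have l: "length ys = Suc m" and g: "\<forall>x\<in>set ys. good x" using Suc.IH ys by auto
      from y l obtain b A where "b < length ys" "A \<in> set_pmf (A_pmf d p)" "y = mat_vec d A (ys ! b)"
        by (auto simp: set_next)
      then have "good y" using g by (auto intro!: good_A[OF d p0 p1])
      then show ?thesis using e l g by auto
    qed
    then show ?case using fin by blast
  qed
  then show ?thesis using Suc by simp
qed

lemma merw_finite: "finite (set_pmf (merw_pmf d p n))"
  using merw_inv by blast

lemma merw_len: "xs \<in> set_pmf (merw_pmf d p n) \<Longrightarrow> length xs = n"
  using merw_inv by blast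

lemma merw_good: "xs \<in> set_pmf (merw_pmf d p n) \<Longrightarrow> x \<in> set xs \<Longrightarrow> good x"
  using merw_inv by blast

lemma merw_step:
  fixes g :: "(nat \<Rightarrow> real) list \<Rightarrow> real"
  shows "(\<integral>xs. g xs \<partial>measure_pmf (merw_pmf d p (Suc (Suc n)))) =
   (\<integral>xs. (\<integral>y. g (xs @ [y]) \<partial>measure_pmf (next_step_pmf d p xs)) \<partial>measure_pmf (merw_pmf d p (Suc n)))"
proof -
  have e: "merw_pmf d p (Suc (Suc n)) = bind_pmf (merw_pmf d p (Suc n)) (\<lambda>xs. map_pmf (\<lambda>y. xs @ [y]) (next_step_pmf d p xs))"
    by simp
  show ?thesis unfolding e
    by (subst integral_bind_pmf_fin) (auto simp: merw_finite finite_next merw_len)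
qed

end

context
  fixes d :: nat and p :: real
  assumes d: "d \<ge> 1" and p0: "0 \<le> p" and p1: "p \<le> 1"
begin

lemma int_merw[simp]: fixes f :: "_ \<Rightarrow> real" shows "integrable (measure_pmf (merw_pmf d p n)) f"
  by (rule integrable_measure_pmf_finite[OF merw_finite[OF d p0 p1]])

lemma pmf_step_cong:
  fixes g :: "(nat \<Rightarrow> real) list \<Rightarrow> real"
  assumes n: "n \<ge> 1"
    and h: "\<And>xs. xs \<in> set_pmf (merw_pmf d p n) \<Longrightarrow> length xs = n \<Longrightarrow> (\<forall>x\<in>set xs. good x) \<Longrightarrow>
               (\<integral>y. g (xs @ [y]) \<partial>measure_pmf (next_step_pmf d p xs)) = h xs"
  shows "(\<integral>xs. g xs \<partial>measure_pmf (merw_pmf d p (Suc n))) = (\<integral>xs. h xs \<partial>measure_pmf (merw_pmf d p n))"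
proof -
  obtain m where m: "n = Suc m" using n by (cases n) auto
  have "(\<integral>xs. g xs \<partial>measure_pmf (merw_pmf d p (Suc n))) =
     (\<integral>xs. (\<integral>y. g (xs @ [y]) \<partial>measure_pmf (next_step_pmf d p xs)) \<partial>measure_pmf (merw_pmf d p n))"
    unfolding m by (rule merw_step[OF d p0 p1])
  also have "\<dots> = (\<integral>xs. h xs \<partial>measure_pmf (merw_pmf d p n))"
  proof (rule integral_cong_AE)
    show "AE xs in measure_pmf (merw_pmf d p n). (\<integral>y. g (xs @ [y]) \<partial>measure_pmf (next_step_pmf d p xs)) = h xs"
      using AE_measure_pmf[of "merw_pmf d p n"]
      by (rule AE_mp) (auto intro!: AE_I2 h simp: merw_len[OF d p0 p1] merw_good[OF d p0 p1])
  qed auto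
  finally show ?thesis .
qed

lemma int_next[simp]: fixes f :: "_ \<Rightarrow> real" shows "length xs \<ge> 1 \<Longrightarrow> integrable (measure_pmf (next_step_pmf d p xs)) f"
  by (rule integrable_measure_pmf_finite[OF finite_next[OF d p0 p1]])

lemma consist:
  fixes f :: "(nat \<Rightarrow> real) \<Rightarrow> real"
  assumes "b < n"
  shows "(\<integral>xs. f (xs ! b) \<partial>measure_pmf (merw_pmf d p n)) = (\<integral>xs. f (xs ! b) \<partial>measure_pmf (merw_pmf d p (Suc b)))"
proof -
  have "(\<integral>xs. f (xs ! b) \<partial>measure_pmf (merw_pmf d p (Suc b + k))) = (\<integral>xs. f (xs ! b) \<partial>measure_pmf (merw_pmf d p (Suc b)))" for k
  proof (induction k)
    case 0 then show ?case by simp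
  next
    case (Suc k)
    have "(\<integral>xs. f (xs ! b) \<partial>measure_pmf (merw_pmf d p (Suc (Suc b + k)))) = (\<integral>xs. f (xs ! b) \<partial>measure_pmf (merw_pmf d p (Suc b + k)))"
      by (rule pmf_step_cong) (auto simp: nth_append)
    then show ?case using Suc by simp
  qed
  from this[of "n - Suc b"] assms show ?thesis by simp
qed

lemma merw_one:
  fixes g :: "(nat \<Rightarrow> real) list \<Rightarrow> real"
  shows "(\<integral>xs. g xs \<partial>measure_pmf (merw_pmf d p (Suc 0))) = (\<integral>x. g [x] \<partial>measure_pmf (first_step_pmf d))"
  by simp

lemma mean_zero:
  assumes "i < d"
  shows "(\<integral>xs. Sv xs i \<partial>measure_pmf (merw_pmf d p n)) = 0"
proof (induction n)
  case 0 then show ?case by (simp add: Sv_def)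
next
  case (Suc n)
  show ?case
  proof (cases "n = 0")
    case True then show ?thesis by (simp add: Sv_def first_lin[OF d p0 p1])
  next
    case False
    have "(\<integral>xs. Sv xs i \<partial>measure_pmf (merw_pmf d p (Suc n))) =
          (\<integral>xs. (1 + aa d p / real n) * Sv xs i \<partial>measure_pmf (merw_pmf d p n))"
      by (rule pmf_step_cong) (use False assms in \<open>auto simp: next_lin[OF d p0 p1] algebra_simps\<close>)
    then show ?thesis using Suc by simp
  qed
qed

lemma second_step:
  assumes "i < d" "j < d"
  shows "(\<integral>xs. (xs ! b) i * (xs ! b) j \<partial>measure_pmf (merw_pmf d p (Suc b))) = (if i = j then 1 / real d else 0)"
  using assms
proof (induction b arbitrary: i j rule: less_induct)
  case (less b)
  show ?case
  proof (cases b)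
    case 0
    then show ?thesis using less.prems by (simp add: first_sq[OF d p0 p1])
  next
    case (Suc m)
    have step: "(\<integral>xs. (xs ! b) i * (xs ! b) j \<partial>measure_pmf (merw_pmf d p (Suc b))) =
          (\<integral>xs. (\<integral>y. y i * y j \<partial>measure_pmf (next_step_pmf d p xs)) \<partial>measure_pmf (merw_pmf d p b))"
      by (rule pmf_step_cong) (auto simp: nth_append Suc)
    show ?thesis
    proof (cases "i = j")
      case False
      have "(\<integral>xs. (\<integral>y. y i * y j \<partial>measure_pmf (next_step_pmf d p xs)) \<partial>measure_pmf (merw_pmf d p b)) =
            (\<integral>xs. 0 \<partial>measure_pmf (merw_pmf d p b))"
      proof (rule integral_cong_AE)
        show "AE xs in measure_pmf (merw_pmf d p b). (\<integral>y. y i * y j \<partial>measure_pmf (next_step_pmf d p xs)) = 0"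
          using AE_measure_pmf[of "merw_pmf d p b"]
          by (rule AE_mp) (use less.prems False Suc in
              \<open>auto intro!: AE_I2 next_cross[OF d p0 p1] simp: merw_len[OF d p0 p1] merw_good[OF d p0 p1]\<close>)
      qed auto
      then show ?thesis using step False by simp
    next
      case True
      define c where "c = (1 - p) / (2 * real d - 1)"
      have "(\<integral>xs. (\<integral>y. y i * y j \<partial>measure_pmf (next_step_pmf d p xs)) \<partial>measure_pmf (merw_pmf d p b)) =
            (\<integral>xs. (\<Sum>k<b. p * ((xs ! k) i)\<^sup>2 + c * (2 * (\<Sum>l<d. ((xs ! k) l)\<^sup>2) - ((xs ! k) i)\<^sup>2)) / real b
                \<partial>measure_pmf (merw_pmf d p b))"
      proof (rule integral_cong_AE)
        show "AE xs in measure_pmf (merw_pmf d p b). (\<integral>y. y i * y j \<partial>measure_pmf (next_step_pmf d p xs)) =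
            (\<Sum>k<b. p * ((xs ! k) i)\<^sup>2 + c * (2 * (\<Sum>l<d. ((xs ! k) l)\<^sup>2) - ((xs ! k) i)\<^sup>2)) / real b"
          using AE_measure_pmf[of "merw_pmf d p b"]
          by (rule AE_mp) (use less.prems True Suc in
              \<open>auto intro!: AE_I2 simp: next_sq[OF d p0 p1] c_def power2_eq_square[symmetric] merw_len[OF d p0 p1]\<close>)
      qed auto
      also have "\<dots> = (\<Sum>k<b. p * (\<integral>xs. ((xs ! k) i)\<^sup>2 \<partial>measure_pmf (merw_pmf d p b))
               + c * (2 * (\<Sum>l<d. (\<integral>xs. ((xs ! k) l)\<^sup>2 \<partial>measure_pmf (merw_pmf d p b)))
                     - (\<integral>xs. ((xs ! k) i)\<^sup>2 \<partial>measure_pmf (merw_pmf d p b)))) / real b"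
        by simp
      also have "\<dots> = (\<Sum>k<b. p * (1 / real d) + c * (2 * (\<Sum>l<d. 1 / real d) - 1 / real d)) / real b"
      proof -
        have e: "(\<integral>xs. ((xs ! k) l)\<^sup>2 \<partial>measure_pmf (merw_pmf d p b)) = 1 / real d" if "k < b" "l < d" for k l
        proof -
          have "(\<integral>xs. ((xs ! k) l)\<^sup>2 \<partial>measure_pmf (merw_pmf d p b)) = (\<integral>xs. ((xs ! k) l)\<^sup>2 \<partial>measure_pmf (merw_pmf d p (Suc k)))"
            using that(1) by (rule consist[where f = "\<lambda>x. (x l)\<^sup>2"])
          also have "\<dots> = 1 / real d" using less.IH[of k l l] that by (simp add: power2_eq_square)
          finally show ?thesis .
        qed
        show ?thesis using less.prems by (intro arg_cong[where f = "\<lambda>x. x / real b"] sum.cong refl) (simp add: e)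
      qed
      also have "\<dots> = 1 / real d"
      proof -
        have "p * (1 / real d) + c * (2 * (\<Sum>l<d. 1 / real d) - 1 / real d) = 1 / real d"
          using d by (simp add: c_def field_simps)
        then show ?thesis using Suc by simp
      qed
      finally show ?thesis using step True by simp
    qed
  qed
qed

end

lemma Gp1: "(x::real) > 0 \<Longrightarrow> Gamma (x + 1) = x * Gamma x"
  by (rule Gamma_plus1) auto

definition Vf :: "real \<Rightarrow> nat \<Rightarrow> real" where
  "Vf a n = (Gamma (real n + 2 * a) / (Gamma (real n) * Gamma (2 * a)) - real n) / (2 * a - 1)"

definition Bf :: "real \<Rightarrow> nat \<Rightarrow> real" where
  "Bf a n = Gamma (real n) / Gamma (real n + a)"

lemma Vf_1: "a > 1/2 \<Longrightarrow> Vf a 1 = 1"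
proof -
  assume a: "a > 1/2"
  have g: "Gamma (1 + 2 * a) = 2 * a * Gamma (2 * a)" using Gp1[of "2*a"] a by (simp add: add.commute)
  have "Gamma (2 * a) > 0" using a by simp
  then have "Gamma (1 + 2 * a) / (Gamma 1 * Gamma (2 * a)) = 2 * a" unfolding g by simp
  moreover have "2 * a - 1 \<noteq> 0" using a by simp
  ultimately show ?thesis by (simp add: Vf_def)
qed

lemma Vf_Suc: "a > 1/2 \<Longrightarrow> n \<ge> 1 \<Longrightarrow> Vf a (Suc n) = (1 + 2 * a / real n) * Vf a n + 1"
proof -
  assume a: "a > 1/2" and n: "n \<ge> 1"
  have g1: "Gamma (real n + 2 * a + 1) = (real n + 2 * a) * Gamma (real n + 2 * a)"
    using Gp1[of "real n + 2 * a"] a by simp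
  have g2: "Gamma (real n + 1) = real n * Gamma (real n)" using Gp1[of "real n"] n by simp
  have pos: "Gamma (real n) > 0" "Gamma (2 * a) > 0" using a n by auto
  define r where "r = Gamma (real n + 2 * a) / (Gamma (real n) * Gamma (2 * a))"
  have "Vf a (Suc n) = (Gamma (real n + 2 * a + 1) / (Gamma (real n + 1) * Gamma (2 * a)) - (real n + 1)) / (2 * a - 1)"
    by (simp add: Vf_def add_ac)
  also have "Gamma (real n + 2 * a + 1) / (Gamma (real n + 1) * Gamma (2 * a)) = (real n + 2 * a) / real n * r"
    unfolding g1 g2 r_def using pos n by simp
  finally have e1: "Vf a (Suc n) = ((real n + 2 * a) / real n * r - (real n + 1)) / (2 * a - 1)" .
  have e2: "Vf a n = (r - real n) / (2 * a - 1)" by (simp add: Vf_def r_def)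
  have "2 * a - 1 \<noteq> 0" "real n \<noteq> 0" using a n by auto
  then show ?thesis unfolding e1 e2 by (simp add: field_simps)
qed

lemma Bf_pos: "a > 0 \<Longrightarrow> n \<ge> 1 \<Longrightarrow> Bf a n > 0"
  by (simp add: Bf_def)

lemma Bf_Suc: "a > 0 \<Longrightarrow> n \<ge> 1 \<Longrightarrow> Bf a (Suc n) = Bf a n * real n / (real n + a)"
proof -
  assume a: "a > 0" and n: "n \<ge> 1"
  have g1: "Gamma (real n + a + 1) = (real n + a) * Gamma (real n + a)" using Gp1[of "real n + a"] a by simp
  have g2: "Gamma (real n + 1) = real n * Gamma (real n)" using Gp1[of "real n"] n by simp
  have pos: "Gamma (real n + a) > 0" using a n by auto
  show ?thesis unfolding Bf_def using g1 g2 pos a n by (simp add: add_ac field_simps)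
qed

context
  fixes d :: nat and p :: real
  assumes d: "d \<ge> 1" and p0: "0 \<le> p" and p1: "p \<le> 1" and ahalf: "aa d p > 1/2"
begin

lemma second_step':
  assumes "i < d" "j < d" "n \<ge> 1"
  shows "(\<integral>xs. (\<integral>y. y i * y j \<partial>measure_pmf (next_step_pmf d p xs)) \<partial>measure_pmf (merw_pmf d p n)) = (if i = j then 1 / real d else 0)"
proof -
  have "(\<integral>xs. (xs ! n) i * (xs ! n) j \<partial>measure_pmf (merw_pmf d p (Suc n))) =
          (\<integral>xs. (\<integral>y. y i * y j \<partial>measure_pmf (next_step_pmf d p xs)) \<partial>measure_pmf (merw_pmf d p n))"
    by (rule pmf_step_cong[OF d p0 p1]) (use assms in \<open>auto simp: nth_append\<close>)
  then show ?thesis using second_step[OF d p0 p1 assms(1,2), of n] by simp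
qed

lemma Q_formula:
  assumes "i < d" "j < d" "n \<ge> 1"
  shows "(\<integral>xs. Sv xs i * Sv xs j \<partial>measure_pmf (merw_pmf d p n)) = (if i = j then Vf (aa d p) n / real d else 0)"
  using assms(3)
proof (induction n rule: dec_induct)
  case base
  have "(\<integral>xs. Sv xs i * Sv xs j \<partial>measure_pmf (merw_pmf d p 1)) = (\<integral>x. x i * x j \<partial>measure_pmf (first_step_pmf d))"
    by (simp add: Sv_def)
  then show ?case using first_sq[OF d p0 p1 assms(1,2)] Vf_1[OF ahalf] by simp
next
  case (step n)
  have "(\<integral>xs. Sv xs i * Sv xs j \<partial>measure_pmf (merw_pmf d p (Suc n))) =
        (\<integral>xs. (1 + 2 * aa d p / real n) * (Sv xs i * Sv xs j) + (\<integral>y. y i * y j \<partial>measure_pmf (next_step_pmf d p xs))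
           \<partial>measure_pmf (merw_pmf d p n))"
  proof (rule pmf_step_cong[OF d p0 p1 step(1)])
    fix xs :: "(nat \<Rightarrow> real) list" assume l: "length xs = n"
    then have l1: "length xs \<ge> 1" using step(1) by simp
    have "(\<integral>y. Sv (xs @ [y]) i * Sv (xs @ [y]) j \<partial>measure_pmf (next_step_pmf d p xs)) =
          (\<integral>y. Sv xs i * Sv xs j + Sv xs i * y j + Sv xs j * y i + y i * y j \<partial>measure_pmf (next_step_pmf d p xs))"
      by (simp add: algebra_simps)
    also have "\<dots> = Sv xs i * Sv xs j + Sv xs i * (\<integral>y. y j \<partial>measure_pmf (next_step_pmf d p xs))
        + Sv xs j * (\<integral>y. y i \<partial>measure_pmf (next_step_pmf d p xs)) + (\<integral>y. y i * y j \<partial>measure_pmf (next_step_pmf d p xs))"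
      using l1 by (simp add: int_next[OF d p0 p1])
    also have "\<dots> = (1 + 2 * aa d p / real n) * (Sv xs i * Sv xs j) + (\<integral>y. y i * y j \<partial>measure_pmf (next_step_pmf d p xs))"
      using l step(1) assms by (simp add: next_lin[OF d p0 p1] algebra_simps)
    finally show "(\<integral>y. Sv (xs @ [y]) i * Sv (xs @ [y]) j \<partial>measure_pmf (next_step_pmf d p xs)) =
          (1 + 2 * aa d p / real n) * (Sv xs i * Sv xs j) + (\<integral>y. y i * y j \<partial>measure_pmf (next_step_pmf d p xs))" .
  qed
  also have "\<dots> = (1 + 2 * aa d p / real n) * (\<integral>xs. Sv xs i * Sv xs j \<partial>measure_pmf (merw_pmf d p n))
       + (\<integral>xs. (\<integral>y. y i * y j \<partial>measure_pmf (next_step_pmf d p xs)) \<partial>measure_pmf (merw_pmf d p n))"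
    by (simp add: int_merw[OF d p0 p1])
  also have "\<dots> = (if i = j then Vf (aa d p) (Suc n) / real d else 0)"
  proof (cases "i = j")
    case True
    have "(1 + 2 * aa d p / real n) * (Vf (aa d p) n / real d) + 1 / real d = ((1 + 2 * aa d p / real n) * Vf (aa d p) n + 1) / real d"
      by (simp add: add_divide_distrib)
    then show ?thesis using True step second_step'[OF assms(1,2) step(1)] Vf_Suc[OF ahalf step(1)] by simp
  next
    case False
    then show ?thesis using step second_step'[OF assms(1,2) step(1)] by simp
  qed
  finally show ?case .
qed

end

context
  fixes d :: nat and p :: real
  assumes d: "d \<ge> 1" and p0: "0 \<le> p" and p1: "p \<le> 1" and ahalf: "aa d p > 1/2"
begin

lemma R_formula:
  assumes "i < d" "n \<ge> 1" "n \<le> m"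
  shows "(\<integral>xs. Sv xs i * Sv (take n xs) i \<partial>measure_pmf (merw_pmf d p m)) =
      Bf (aa d p) n / Bf (aa d p) m * Vf (aa d p) n / real d"
  using assms(3)
proof (induction m rule: dec_induct)
  case base
  have "(\<integral>xs. Sv xs i * Sv (take n xs) i \<partial>measure_pmf (merw_pmf d p n)) = (\<integral>xs. Sv xs i * Sv xs i \<partial>measure_pmf (merw_pmf d p n))"
  proof (rule integral_cong_AE)
    show "AE xs in measure_pmf (merw_pmf d p n). Sv xs i * Sv (take n xs) i = Sv xs i * Sv xs i"
      using AE_measure_pmf[of "merw_pmf d p n"] by (rule AE_mp) (auto intro!: AE_I2 simp: merw_len[OF d p0 p1])
  qed auto
  then show ?case using Q_formula[OF d p0 p1 ahalf assms(1) assms(1) assms(2)] Bf_pos[of "aa d p" n] ahalf assms(2) by simp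
next
  case (step m)
  have m1: "m \<ge> 1" using step assms by simp
  have "(\<integral>xs. Sv xs i * Sv (take n xs) i \<partial>measure_pmf (merw_pmf d p (Suc m))) =
        (\<integral>xs. (1 + aa d p / real m) * (Sv xs i * Sv (take n xs) i) \<partial>measure_pmf (merw_pmf d p m))"
  proof (rule pmf_step_cong[OF d p0 p1 m1])
    fix xs :: "(nat \<Rightarrow> real) list" assume l: "length xs = m"
    then have l1: "length xs \<ge> 1" using m1 by simp
    have tk: "take n (xs @ [y]) = take n xs" for y using l step(1) by simp
    have "(\<integral>y. Sv (xs @ [y]) i * Sv (take n (xs @ [y])) i \<partial>measure_pmf (next_step_pmf d p xs)) =
          (\<integral>y. Sv xs i * Sv (take n xs) i + Sv (take n xs) i * y i \<partial>measure_pmf (next_step_pmf d p xs))"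
      by (simp only: tk Sv_snoc) (simp add: algebra_simps)
    also have "\<dots> = (1 + aa d p / real m) * (Sv xs i * Sv (take n xs) i)"
      using l1 l m1 assms by (simp add: int_next[OF d p0 p1] next_lin[OF d p0 p1] algebra_simps)
    finally show "(\<integral>y. Sv (xs @ [y]) i * Sv (take n (xs @ [y])) i \<partial>measure_pmf (next_step_pmf d p xs)) =
          (1 + aa d p / real m) * (Sv xs i * Sv (take n xs) i)" .
  qed
  also have "\<dots> = (1 + aa d p / real m) * (\<integral>xs. Sv xs i * Sv (take n xs) i \<partial>measure_pmf (merw_pmf d p m))"
    by simp
  also have "\<dots> = Bf (aa d p) n / Bf (aa d p) (Suc m) * Vf (aa d p) n / real d"
  proof -
    have a0: "aa d p > 0" using ahalf by simp
    have "Bf (aa d p) m > 0" using Bf_pos[OF a0 m1] .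
    moreover have "real m + aa d p > 0" "real d > 0" using a0 d by auto
    ultimately show ?thesis unfolding step(3) Bf_Suc[OF a0 m1] using m1 a0 by (simp add: field_simps)
  qed
  finally show ?case .
qed

end

declare upt_Suc[simp del]

locale mctx = prob_space M for M :: "'a measure" +
  fixes d :: nat and p :: real and X :: "nat \<Rightarrow> 'a \<Rightarrow> nat \<Rightarrow> real"
  assumes d: "d \<ge> 1" and p0: "0 \<le> p" and p1: "p \<le> 1" and ahalf: "aa d p > 1/2"
    and MERW: "is_MERW M d p X"
begin

abbreviation LS :: "nat \<Rightarrow> 'a \<Rightarrow> (nat \<Rightarrow> real) list" where
  "LS n \<omega> \<equiv> map (\<lambda>k. X k \<omega>) [1..<Suc n]"

lemma LS_meas: "(\<lambda>\<omega>. LS n \<omega>) \<in> measurable M (count_space UNIV)"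
  using MERW unfolding is_MERW_def by blast

lemma LS_distr: "distr M (count_space UNIV) (\<lambda>\<omega>. LS n \<omega>) = measure_pmf (merw_pmf d p n)"
  using MERW unfolding is_MERW_def by blast

lemma M_LS: "(\<lambda>\<omega>. g (LS n \<omega>) :: real) \<in> borel_measurable M"
  by (rule measurable_compose[OF LS_meas]) simp

lemma E_LS: fixes g :: "_ \<Rightarrow> real" shows "(\<integral>\<omega>. g (LS n \<omega>) \<partial>M) = (\<integral>xs. g xs \<partial>measure_pmf (merw_pmf d p n))"
proof -
  have "(\<integral>xs. g xs \<partial>distr M (count_space UNIV) (\<lambda>\<omega>. LS n \<omega>)) = (\<integral>\<omega>. g (LS n \<omega>) \<partial>M)"
    by (rule integral_distr[OF LS_meas]) simp
  then show ?thesis unfolding LS_distr by simp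
qed

lemma I_LS: "integrable M (\<lambda>\<omega>. g (LS n \<omega>) :: real)"
proof -
  have "integrable (distr M (count_space UNIV) (\<lambda>\<omega>. LS n \<omega>)) g"
    unfolding LS_distr by (rule int_merw[OF d p0 p1])
  then show ?thesis by (subst (asm) integrable_distr_eq[OF LS_meas]) simp_all
qed

lemma pos_Sv: "merw_pos X n \<omega> i = Sv (LS n \<omega>) i"
proof -
  have "Sv (LS n \<omega>) i = sum_list (map (\<lambda>k. X k \<omega> i) [1..<Suc n])"
    unfolding Sv_def by (simp add: comp_def)
  also have "\<dots> = (\<Sum>k\<in>set [1..<Suc n]. X k \<omega> i)"
    by (rule sum_list_distinct_conv_sum_set) simp
  also have "set [1..<Suc n] = {1..n}" by auto
  finally show ?thesis by (simp add: merw_pos_def)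
qed

lemma take_LS: "n \<le> m \<Longrightarrow> take n (LS m \<omega>) = LS n \<omega>"
  by (simp add: take_map take_upt)

lemma pos_meas: "(\<lambda>\<omega>. merw_pos X n \<omega> i) \<in> borel_measurable M"
  unfolding pos_Sv by (rule M_LS)

lemma pos_prod_int: "integrable M (\<lambda>\<omega>. merw_pos X n \<omega> i * merw_pos X m \<omega> j)"
proof -
  have "integrable M (\<lambda>\<omega>. (\<lambda>xs. Sv (take n xs) i * Sv (take m xs) j) (LS (max n m) \<omega>))"
    by (rule I_LS)
  then show ?thesis by (simp only: pos_Sv take_LS[OF max.cobounded1] take_LS[OF max.cobounded2])
qed

lemma pos_int: "integrable M (\<lambda>\<omega>. merw_pos X n \<omega> i)"
  unfolding pos_Sv by (rule I_LS)

lemma mean_M: "i < d \<Longrightarrow> (\<integral>\<omega>. merw_pos X n \<omega> i \<partial>M) = 0"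
  unfolding pos_Sv E_LS[of "\<lambda>xs. Sv xs i"] by (rule mean_zero[OF d p0 p1])

lemma Q_M: "i < d \<Longrightarrow> j < d \<Longrightarrow> n \<ge> 1 \<Longrightarrow>
   (\<integral>\<omega>. merw_pos X n \<omega> i * merw_pos X n \<omega> j \<partial>M) = (if i = j then Vf (aa d p) n / real d else 0)"
  unfolding pos_Sv E_LS[of "\<lambda>xs. Sv xs i * Sv xs j"] by (rule Q_formula[OF d p0 p1 ahalf])

lemma R_M: "i < d \<Longrightarrow> 1 \<le> n \<Longrightarrow> n \<le> m \<Longrightarrow>
   (\<integral>\<omega>. merw_pos X m \<omega> i * merw_pos X n \<omega> i \<partial>M) = Bf (aa d p) n / Bf (aa d p) m * Vf (aa d p) n / real d"
proof -
  assume a: "i < d" "1 \<le> n" "n \<le> m"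
  have "(\<integral>\<omega>. merw_pos X m \<omega> i * merw_pos X n \<omega> i \<partial>M) = (\<integral>\<omega>. (\<lambda>xs. Sv xs i * Sv (take n xs) i) (LS m \<omega>) \<partial>M)"
    using a by (simp only: pos_Sv take_LS)
  also have "\<dots> = Bf (aa d p) n / Bf (aa d p) m * Vf (aa d p) n / real d"
    unfolding E_LS[of "\<lambda>xs. Sv xs i * Sv (take n xs) i"] by (rule R_formula[OF d p0 p1 ahalf a])
  finally show ?thesis .
qed

end

lemma Gs_eq:
  fixes a :: real
  assumes a: "a > 0" and n: "n \<ge> 1"
  shows "Gamma_series' a n = Bf a n * real n powr a * Gamma a"
proof -
  have f: "fact (n - 1) = Gamma (real n)"
    using Gamma_fact[of "n - 1", where 'a = real] n by (simp add: of_nat_diff)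
  have pa: "pochhammer a n = Gamma (a + real n) / Gamma a"
    by (rule pochhammer_Gamma) (use a in auto)
  have e: "exp (a * of_real (ln (real n))) = real n powr a"
    using n by (simp add: powr_def)
  have g: "Gamma (real n + a) > 0" "Gamma a > 0" using a n by auto
  show ?thesis
    unfolding Gamma_series'_def f pa e Bf_def using g by (simp add: add.commute field_simps)
qed

lemma Bf_asym:
  fixes a :: real
  assumes a: "a > 0"
  shows "(\<lambda>n. Bf a n * real n powr a) \<longlonglongrightarrow> 1"
proof -
  have gne: "Gamma a \<noteq> 0" using a by (metis Gamma_real_pos less_irrefl)
  have "(\<lambda>n. Gamma_series' a n / Gamma a) \<longlonglongrightarrow> Gamma a / Gamma a"
    by (intro tendsto_intros Gamma_series'_LIMSEQ gne)
  then have l: "(\<lambda>n. Gamma_series' a n / Gamma a) \<longlonglongrightarrow> 1" by (simp add: gne)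
  have "eventually (\<lambda>n. Gamma_series' a n / Gamma a = Bf a n * real n powr a) sequentially"
    using eventually_ge_at_top[of 1] by eventually_elim (use a in \<open>simp add: Gs_eq gne\<close>)
  then show ?thesis using l by (rule Lim_transform_eventually[rotated])
qed

lemma W_eq:
  fixes a :: real
  assumes a: "a > 1/2" and n: "n \<ge> 1"
  shows "(Bf a n)\<^sup>2 * Vf a n =
    ((Bf a n * real n powr a)\<^sup>2 / ((Bf (2 * a) n * real n powr (2 * a)) * Gamma (2 * a))
      - (Bf a n * real n powr a)\<^sup>2 * real n powr (1 - 2 * a)) / (2 * a - 1)"
proof -
  define P where "P = real n powr (2 * a)"
  have P: "P > 0" using n by (simp add: P_def)
  have pp: "(real n powr a)\<^sup>2 = P" unfolding P_def power2_eq_square using n by (simp add: powr_add[symmetric])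
  have pn: "real n powr (1 - 2 * a) = real n / P" unfolding P_def using n by (simp add: powr_diff)
  have g: "Gamma (real n) > 0" "Gamma (real n + 2 * a) > 0" "Gamma (2 * a) > 0" using a n by auto
  have b2: "Bf (2 * a) n = Gamma (real n) / Gamma (real n + 2 * a)" by (simp add: Bf_def)
  have "2 * a - 1 \<noteq> 0" using a by simp
  show ?thesis
    unfolding power_mult_distrib pp pn P_def[symmetric] b2 Vf_def using g P
    by (simp add: field_simps)
qed

lemma W_lim:
  fixes a :: real
  assumes a: "a > 1/2"
  shows "(\<lambda>n. (Bf a n)\<^sup>2 * Vf a n) \<longlonglongrightarrow> 1 / ((2 * a - 1) * Gamma (2 * a))"
proof -
  have t: "(\<lambda>n. Bf a n * real n powr a) \<longlonglongrightarrow> 1" using a by (intro Bf_asym) simp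
  have s: "(\<lambda>n. Bf (2 * a) n * real n powr (2 * a)) \<longlonglongrightarrow> 1" using a by (intro Bf_asym) simp
  have z: "(\<lambda>n. real n powr (1 - 2 * a)) \<longlonglongrightarrow> 0"
    by (rule tendsto_neg_powr) (use a in \<open>simp_all add: filterlim_real_sequentially\<close>)
  have g: "Gamma (2 * a) \<noteq> 0" using a by (metis Gamma_real_pos less_irrefl mult_pos_pos zero_less_numeral order.strict_trans zero_less_divide_1_iff)
  have "(\<lambda>n. ((Bf a n * real n powr a)\<^sup>2 / ((Bf (2 * a) n * real n powr (2 * a)) * Gamma (2 * a))
      - (Bf a n * real n powr a)\<^sup>2 * real n powr (1 - 2 * a)) / (2 * a - 1))
     \<longlonglongrightarrow> ((1\<^sup>2 / (1 * Gamma (2 * a)) - 1\<^sup>2 * 0) / (2 * a - 1))"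
    using a by (intro tendsto_intros t s z) (auto simp: g)
  then have l: "(\<lambda>n. ((Bf a n * real n powr a)\<^sup>2 / ((Bf (2 * a) n * real n powr (2 * a)) * Gamma (2 * a))
      - (Bf a n * real n powr a)\<^sup>2 * real n powr (1 - 2 * a)) / (2 * a - 1))
     \<longlonglongrightarrow> 1 / ((2 * a - 1) * Gamma (2 * a))" by (simp add: mult.commute)
  have "eventually (\<lambda>n. ((Bf a n * real n powr a)\<^sup>2 / ((Bf (2 * a) n * real n powr (2 * a)) * Gamma (2 * a))
      - (Bf a n * real n powr a)\<^sup>2 * real n powr (1 - 2 * a)) / (2 * a - 1) = (Bf a n)\<^sup>2 * Vf a n) sequentially"
    using eventually_ge_at_top[of 1] by eventually_elim (use a in \<open>simp add: W_eq\<close>)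
  then show ?thesis using l by (rule Lim_transform_eventually[rotated])
qed

lemma amgm_pt:
  fixes u v t :: real
  assumes t: "t > 0"
  shows "\<bar>u * v\<bar> \<le> t * u\<^sup>2 + v\<^sup>2 / t"
proof -
  have "0 \<le> (t * \<bar>u\<bar> - \<bar>v\<bar>)\<^sup>2" by simp
  then have "2 * t * \<bar>u\<bar> * \<bar>v\<bar> \<le> t\<^sup>2 * u\<^sup>2 + v\<^sup>2" by (simp add: power2_eq_square algebra_simps)
  then have "2 * \<bar>u\<bar> * \<bar>v\<bar> \<le> t * u\<^sup>2 + v\<^sup>2 / t" using t
    by (simp add: field_simps power2_eq_square)
  moreover have "0 \<le> t * u\<^sup>2 + v\<^sup>2 / t" using t by simp
  ultimately show ?thesis by (simp add: abs_mult)
qed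

lemma amgm_int:
  fixes u v :: "'a \<Rightarrow> real"
  assumes iu: "integrable M (\<lambda>x. (u x)\<^sup>2)" and iv: "integrable M (\<lambda>x. (v x)\<^sup>2)"
    and iuv: "integrable M (\<lambda>x. u x * v x)" and t: "t > 0"
  shows "\<bar>\<integral>x. u x * v x \<partial>M\<bar> \<le> t * (\<integral>x. (u x)\<^sup>2 \<partial>M) + (\<integral>x. (v x)\<^sup>2 \<partial>M) / t"
proof -
  have i2: "integrable M (\<lambda>x. t * (u x)\<^sup>2 + (v x)\<^sup>2 / t)" using iu iv by simp
  have "(\<integral>x. u x * v x \<partial>M) \<le> (\<integral>x. t * (u x)\<^sup>2 + (v x)\<^sup>2 / t \<partial>M)"
    by (rule integral_mono[OF iuv i2]) (use amgm_pt[OF t] in \<open>simp add: abs_le_iff\<close>)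
  moreover have "- (\<integral>x. u x * v x \<partial>M) \<le> (\<integral>x. t * (u x)\<^sup>2 + (v x)\<^sup>2 / t \<partial>M)"
  proof -
    have "(\<integral>x. - (u x * v x) \<partial>M) \<le> (\<integral>x. t * (u x)\<^sup>2 + (v x)\<^sup>2 / t \<partial>M)"
      by (rule integral_mono[OF _ i2]) (use amgm_pt[OF t] iuv in \<open>simp_all add: abs_le_iff\<close>)
    then show ?thesis by simp
  qed
  moreover have "(\<integral>x. t * (u x)\<^sup>2 + (v x)\<^sup>2 / t \<partial>M) = t * (\<integral>x. (u x)\<^sup>2 \<partial>M) + (\<integral>x. (v x)\<^sup>2 \<partial>M) / t"
    using iu iv by simp
  ultimately show ?thesis by linarith
qed

lemma int_prod_to_0:
  fixes u v :: "nat \<Rightarrow> 'a \<Rightarrow> real"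
  assumes iu: "\<And>n. integrable M (\<lambda>x. (u n x)\<^sup>2)" and iv: "\<And>n. integrable M (\<lambda>x. (v n x)\<^sup>2)"
    and iuv: "\<And>n. integrable M (\<lambda>x. u n x * v n x)"
    and lu: "(\<lambda>n. \<integral>x. (u n x)\<^sup>2 \<partial>M) \<longlonglongrightarrow> 0"
    and bv: "\<And>n. (\<integral>x. (v n x)\<^sup>2 \<partial>M) \<le> C"
  shows "(\<lambda>n. \<integral>x. u n x * v n x \<partial>M) \<longlonglongrightarrow> 0"
proof (rule LIMSEQ_I)
  fix r :: real assume r: "r > 0"
  define t where "t = 2 * (\<bar>C\<bar> + 1) / r"
  have t: "t > 0" unfolding t_def using r by simp
  have "r / (2 * t) > 0" using r t by simp
  from LIMSEQ_D[OF lu this] obtain N where N: "\<And>n. n \<ge> N \<Longrightarrow> norm ((\<integral>x. (u n x)\<^sup>2 \<partial>M) - 0) < r / (2 * t)"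
    by blast
  have Ct: "C / t < r / 2"
  proof -
    have "C / t = C * r / (2 * (\<bar>C\<bar> + 1))" unfolding t_def using r by (simp add: field_simps)
    also have "\<dots> < r / 2"
    proof -
      have "C * r < (\<bar>C\<bar> + 1) * r" using r by (intro mult_strict_right_mono) auto
      then show ?thesis by (simp add: field_simps)
    qed
    finally show ?thesis .
  qed
  show "\<exists>no. \<forall>n\<ge>no. norm ((\<integral>x. u n x * v n x \<partial>M) - 0) < r"
  proof (intro exI allI impI)
    fix n assume n: "n \<ge> N"
    have h1: "\<bar>\<integral>x. u n x * v n x \<partial>M\<bar> \<le> t * (\<integral>x. (u n x)\<^sup>2 \<partial>M) + (\<integral>x. (v n x)\<^sup>2 \<partial>M) / t"
      by (rule amgm_int[OF iu iv iuv t])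
    have h2: "t * (\<integral>x. (u n x)\<^sup>2 \<partial>M) < r / 2"
    proof -
      have "(\<integral>x. (u n x)\<^sup>2 \<partial>M) < r / (2 * t)" using N[OF n] by simp
      then have "t * (\<integral>x. (u n x)\<^sup>2 \<partial>M) < t * (r / (2 * t))" using t by (rule mult_strict_left_mono)
      also have "\<dots> = r / 2" using t by simp
      finally show ?thesis .
    qed
    have h3: "(\<integral>x. (v n x)\<^sup>2 \<partial>M) / t \<le> C / t" using bv[of n] t by (simp add: divide_right_mono)
    from h1 h2 h3 Ct have "\<bar>\<integral>x. u n x * v n x \<partial>M\<bar> < r" by linarith
    then show "norm ((\<integral>x. u n x * v n x \<partial>M) - 0) < r" by simp
  qed
qed

lemma prod_int:
  fixes f g :: "'a \<Rightarrow> real"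
  assumes "integrable M (\<lambda>x. (f x)\<^sup>2)" "integrable M (\<lambda>x. (g x)\<^sup>2)"
    "f \<in> borel_measurable M" "g \<in> borel_measurable M"
  shows "integrable M (\<lambda>x. f x * g x)"
proof (rule Bochner_Integration.integrable_bound)
  show "integrable M (\<lambda>x. (f x)\<^sup>2 + (g x)\<^sup>2)" using assms by simp
  show "(\<lambda>x. f x * g x) \<in> borel_measurable M" using assms by simp
  show "AE x in M. norm (f x * g x) \<le> norm ((f x)\<^sup>2 + (g x)\<^sup>2)"
    using amgm_pt[of 1] by (intro AE_I2) simp
qed

locale mctxL = mctx +
  fixes L :: "'a \<Rightarrow> nat \<Rightarrow> real"
  assumes Lmeas: "\<forall>i<d. (\<lambda>\<omega>. L \<omega> i) \<in> borel_measurable M"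
    and Lconv: "AE \<omega> in M. \<forall>i<d. (\<lambda>n. real n powr (- aa d p) * merw_pos X n \<omega> i) \<longlonglongrightarrow> L \<omega> i"
begin

abbreviation Mn :: "nat \<Rightarrow> 'a \<Rightarrow> nat \<Rightarrow> real" where
  "Mn n \<omega> i \<equiv> Bf (aa d p) n * merw_pos X n \<omega> i"
abbreviation W :: "nat \<Rightarrow> real" where
  "W n \<equiv> (Bf (aa d p) n)\<^sup>2 * Vf (aa d p) n"
abbreviation Wl :: real where
  "Wl \<equiv> 1 / ((2 * aa d p - 1) * Gamma (2 * aa d p))"

lemma a_pos: "aa d p > 0" using ahalf by simp

lemma dn: "real d \<noteq> 0" using d by simp

lemma Lm: "i < d \<Longrightarrow> (\<lambda>\<omega>. L \<omega> i) \<in> borel_measurable M" using Lmeas by blast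

lemma W_tendsto: "(\<lambda>n. W n) \<longlonglongrightarrow> Wl" using W_lim[OF ahalf] .

lemma Mconv: "AE \<omega> in M. \<forall>i<d. (\<lambda>n. Mn n \<omega> i) \<longlonglongrightarrow> L \<omega> i"
  using Lconv
proof (rule AE_mp, intro AE_I2 impI allI)
  fix \<omega> i assume H: "\<forall>i<d. (\<lambda>n. real n powr (- aa d p) * merw_pos X n \<omega> i) \<longlonglongrightarrow> L \<omega> i" and i: "i < d"
  have "(\<lambda>n. (Bf (aa d p) n * real n powr (aa d p)) * (real n powr (- aa d p) * merw_pos X n \<omega> i)) \<longlonglongrightarrow> 1 * L \<omega> i"
    by (intro tendsto_mult Bf_asym a_pos) (use H i in blast)
  moreover have "eventually (\<lambda>n. (Bf (aa d p) n * real n powr (aa d p)) * (real n powr (- aa d p) * merw_pos X n \<omega> i) = Mn n \<omega> i) sequentially"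
    using eventually_ge_at_top[of 1]
  proof eventually_elim
    case (elim n)
    have "real n powr (aa d p) * real n powr (- aa d p) = 1" using elim by (simp add: powr_add[symmetric])
    then show ?case by (simp add: algebra_simps)
  qed
  ultimately show "(\<lambda>n. Mn n \<omega> i) \<longlonglongrightarrow> L \<omega> i" by (simp add: Lim_transform_eventually)
qed

lemma int_LS2: "integrable M (\<lambda>\<omega>. f (merw_pos X m \<omega> i) (merw_pos X n \<omega> j) :: real)"
proof -
  have "integrable M (\<lambda>\<omega>. (\<lambda>xs. f (Sv (take m xs) i) (Sv (take n xs) j)) (LS (max m n) \<omega>))"
    by (rule I_LS)
  then show ?thesis by (simp only: pos_Sv take_LS[OF max.cobounded1] take_LS[OF max.cobounded2])
qed

lemma diff_sq:
  assumes "i < d" "1 \<le> n" "n \<le> m"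
  shows "(\<integral>\<omega>. (Mn m \<omega> i - Mn n \<omega> i)\<^sup>2 \<partial>M) = (W m - W n) / real d"
proof -
  define Bm Bn where "Bm = Bf (aa d p) m" and "Bn = Bf (aa d p) n"
  have Bm: "Bm > 0" unfolding Bm_def using a_pos assms by (intro Bf_pos) auto
  have e: "(\<lambda>\<omega>. (Mn m \<omega> i - Mn n \<omega> i)\<^sup>2) = (\<lambda>\<omega>. Bm\<^sup>2 * (merw_pos X m \<omega> i * merw_pos X m \<omega> i)
       - 2 * Bm * Bn * (merw_pos X m \<omega> i * merw_pos X n \<omega> i) + Bn\<^sup>2 * (merw_pos X n \<omega> i * merw_pos X n \<omega> i))"
    by (rule ext) (simp add: Bm_def Bn_def power2_eq_square algebra_simps)
  have "(\<integral>\<omega>. (Mn m \<omega> i - Mn n \<omega> i)\<^sup>2 \<partial>M) = Bm\<^sup>2 * (\<integral>\<omega>. merw_pos X m \<omega> i * merw_pos X m \<omega> i \<partial>M)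
       - 2 * Bm * Bn * (\<integral>\<omega>. merw_pos X m \<omega> i * merw_pos X n \<omega> i \<partial>M) + Bn\<^sup>2 * (\<integral>\<omega>. merw_pos X n \<omega> i * merw_pos X n \<omega> i \<partial>M)"
    unfolding e by (simp add: pos_prod_int)
  also have "\<dots> = Bm\<^sup>2 * (Vf (aa d p) m / real d) - 2 * Bm * Bn * (Bn / Bm * Vf (aa d p) n / real d) + Bn\<^sup>2 * (Vf (aa d p) n / real d)"
    using assms by (simp add: Q_M R_M Bm_def Bn_def)
  also have "\<dots> = (W m - W n) / real d"
    using Bm dn by (simp add: Bm_def[symmetric] Bn_def[symmetric] field_simps power2_eq_square)
  finally show ?thesis .
qed

lemma W_mono: "i < d \<Longrightarrow> 1 \<le> n \<Longrightarrow> n \<le> m \<Longrightarrow> W n \<le> W m"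
proof -
  assume a: "i < d" "1 \<le> n" "n \<le> m"
  have "0 \<le> (\<integral>\<omega>. (Mn m \<omega> i - Mn n \<omega> i)\<^sup>2 \<partial>M)" by simp
  then have "0 \<le> (W m - W n) / real d" using diff_sq[OF a] by simp
  then show ?thesis using d by (simp add: divide_nonneg_pos zero_le_divide_iff)
qed

lemma W_le: "1 \<le> n \<Longrightarrow> W n \<le> Wl"
proof -
  assume n: "1 \<le> n"
  have "0 < d" using d by simp
  show ?thesis
    by (rule LIMSEQ_le_const[OF W_tendsto]) (use W_mono[OF \<open>0 < d\<close> n] in blast)
qed

lemma fatou:
  assumes i: "i < d" and n: "1 \<le> n"
  shows "integrable M (\<lambda>\<omega>. (L \<omega> i - Mn n \<omega> i)\<^sup>2)" "(\<integral>\<omega>. (L \<omega> i - Mn n \<omega> i)\<^sup>2 \<partial>M) \<le> (Wl - W n) / real d"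
proof -
  note [measurable] = pos_meas Lm[OF i]
  have meas: "\<And>m. (\<lambda>\<omega>. ennreal ((Mn m \<omega> i - Mn n \<omega> i)\<^sup>2)) \<in> borel_measurable M" by measurable
  have nn: "(\<integral>\<^sup>+\<omega>. ennreal ((Mn m \<omega> i - Mn n \<omega> i)\<^sup>2) \<partial>M) = ennreal ((W m - W n) / real d)" if m: "n \<le> m" for m
  proof -
    have "integrable M (\<lambda>\<omega>. (Mn m \<omega> i - Mn n \<omega> i)\<^sup>2)"
      by (rule int_LS2[where f = "\<lambda>x y. (Bf (aa d p) m * x - Bf (aa d p) n * y)\<^sup>2"])
    then show ?thesis using diff_sq[OF i n m] by (subst nn_integral_eq_integral) auto
  qed
  have ls: "(\<lambda>m. \<integral>\<^sup>+\<omega>. ennreal ((Mn m \<omega> i - Mn n \<omega> i)\<^sup>2) \<partial>M) \<longlonglongrightarrow> ennreal ((Wl - W n) / real d)"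
  proof -
    have "(\<lambda>m. ennreal ((W m - W n) / real d)) \<longlonglongrightarrow> ennreal ((Wl - W n) / real d)"
      by (intro tendsto_ennrealI tendsto_intros W_tendsto dn)
    moreover have "eventually (\<lambda>m. ennreal ((W m - W n) / real d) = (\<integral>\<^sup>+\<omega>. ennreal ((Mn m \<omega> i - Mn n \<omega> i)\<^sup>2) \<partial>M)) sequentially"
      using eventually_ge_at_top[of n] by eventually_elim (simp add: nn)
    ultimately show ?thesis by (rule Lim_transform_eventually)
  qed
  have li: "AE \<omega> in M. liminf (\<lambda>m. ennreal ((Mn m \<omega> i - Mn n \<omega> i)\<^sup>2)) = ennreal ((L \<omega> i - Mn n \<omega> i)\<^sup>2)"
    using Mconv
  proof (rule AE_mp, intro AE_I2 impI)
    fix \<omega> assume "\<forall>i<d. (\<lambda>m. Mn m \<omega> i) \<longlonglongrightarrow> L \<omega> i"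
    then have "(\<lambda>m. Mn m \<omega> i) \<longlonglongrightarrow> L \<omega> i" using i by blast
    then have "(\<lambda>m. ennreal ((Mn m \<omega> i - Mn n \<omega> i)\<^sup>2)) \<longlonglongrightarrow> ennreal ((L \<omega> i - Mn n \<omega> i)\<^sup>2)"
      by (intro tendsto_ennrealI tendsto_intros)
    then show "liminf (\<lambda>m. ennreal ((Mn m \<omega> i - Mn n \<omega> i)\<^sup>2)) = ennreal ((L \<omega> i - Mn n \<omega> i)\<^sup>2)"
      by (intro lim_imp_Liminf) simp_all
  qed
  have "(\<integral>\<^sup>+\<omega>. ennreal ((L \<omega> i - Mn n \<omega> i)\<^sup>2) \<partial>M) = (\<integral>\<^sup>+\<omega>. liminf (\<lambda>m. ennreal ((Mn m \<omega> i - Mn n \<omega> i)\<^sup>2)) \<partial>M)"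
    using li by (intro nn_integral_cong_AE) (auto elim!: AE_mp)
  also have "\<dots> \<le> liminf (\<lambda>m. \<integral>\<^sup>+\<omega>. ennreal ((Mn m \<omega> i - Mn n \<omega> i)\<^sup>2) \<partial>M)"
    by (rule nn_integral_liminf[OF meas])
  also have "\<dots> = ennreal ((Wl - W n) / real d)"
    by (intro lim_imp_Liminf ls) simp
  finally have bound: "(\<integral>\<^sup>+\<omega>. ennreal ((L \<omega> i - Mn n \<omega> i)\<^sup>2) \<partial>M) \<le> ennreal ((Wl - W n) / real d)" .
  show int: "integrable M (\<lambda>\<omega>. (L \<omega> i - Mn n \<omega> i)\<^sup>2)"
  proof (rule integrableI_nonneg)
    show "(\<lambda>\<omega>. (L \<omega> i - Mn n \<omega> i)\<^sup>2) \<in> borel_measurable M" by measurable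
    show "AE x in M. 0 \<le> (L x i - Mn n x i)\<^sup>2" by simp
    show "(\<integral>\<^sup>+\<omega>. ennreal ((L \<omega> i - Mn n \<omega> i)\<^sup>2) \<partial>M) < \<infinity>"
      using bound by (simp add: le_less_trans)
  qed
  have "ennreal (\<integral>\<omega>. (L \<omega> i - Mn n \<omega> i)\<^sup>2 \<partial>M) \<le> ennreal ((Wl - W n) / real d)"
    using bound by (subst (asm) nn_integral_eq_integral[OF int]) auto
  moreover have "0 \<le> (Wl - W n) / real d" using W_le[OF n] by simp
  ultimately show "(\<integral>\<omega>. (L \<omega> i - Mn n \<omega> i)\<^sup>2 \<partial>M) \<le> (Wl - W n) / real d"
    by (simp add: ennreal_le_iff)
qed

end

lemma sq_le2: "(x::real)\<^sup>2 \<le> 2 * (x - y)\<^sup>2 + 2 * y\<^sup>2"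
proof -
  have "2 * (x - y)\<^sup>2 + 2 * y\<^sup>2 - x\<^sup>2 = (x - 2 * y)\<^sup>2" by (simp add: power2_eq_square algebra_simps)
  moreover have "0 \<le> (x - 2 * y)\<^sup>2" by simp
  ultimately show ?thesis by linarith
qed

context mctxL
begin

lemma e_lim: "i < d \<Longrightarrow> (\<lambda>n. \<integral>\<omega>. (L \<omega> i - Mn (Suc n) \<omega> i)\<^sup>2 \<partial>M) \<longlonglongrightarrow> 0"
proof -
  assume i: "i < d"
  have up: "(\<lambda>n. (Wl - W (Suc n)) / real d) \<longlonglongrightarrow> (Wl - Wl) / real d"
    by (intro tendsto_intros LIMSEQ_Suc[OF W_tendsto] dn)
  show ?thesis
  proof (rule tendsto_sandwich[where f = "\<lambda>_. 0" and h = "\<lambda>n. (Wl - W (Suc n)) / real d"])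
    show "eventually (\<lambda>n. 0 \<le> (\<integral>\<omega>. (L \<omega> i - Mn (Suc n) \<omega> i)\<^sup>2 \<partial>M)) sequentially" by simp
    show "eventually (\<lambda>n. (\<integral>\<omega>. (L \<omega> i - Mn (Suc n) \<omega> i)\<^sup>2 \<partial>M) \<le> (Wl - W (Suc n)) / real d) sequentially"
      using fatou(2)[OF i] by simp
    show "(\<lambda>n. (Wl - W (Suc n)) / real d) \<longlonglongrightarrow> 0" using up by simp
  qed simp
qed

lemma M2_int: "integrable M (\<lambda>\<omega>. (Mn n \<omega> i)\<^sup>2)"
  using int_LS2[where f = "\<lambda>x y. (Bf (aa d p) n * x)\<^sup>2" and m = n and n = n and i = i and j = i] by simp

lemma M_int: "integrable M (\<lambda>\<omega>. Mn n \<omega> i)"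
  using int_LS2[where f = "\<lambda>x y. Bf (aa d p) n * x" and m = n and n = n and i = i and j = i] by simp

lemma M_meas: "(\<lambda>\<omega>. Mn n \<omega> i) \<in> borel_measurable M"
  using pos_meas by simp

lemma L2_int: "i < d \<Longrightarrow> integrable M (\<lambda>\<omega>. (L \<omega> i)\<^sup>2)"
proof -
  assume i: "i < d"
  note [measurable] = pos_meas Lm[OF i]
  show ?thesis
  proof (rule Bochner_Integration.integrable_bound)
    show "integrable M (\<lambda>\<omega>. 2 * (L \<omega> i - Mn 1 \<omega> i)\<^sup>2 + 2 * (Mn 1 \<omega> i)\<^sup>2)"
      using fatou(1)[OF i, of 1] M2_int[of 1 i] by simp
    show "(\<lambda>\<omega>. (L \<omega> i)\<^sup>2) \<in> borel_measurable M" by measurable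
    show "AE \<omega> in M. norm ((L \<omega> i)\<^sup>2) \<le> norm (2 * (L \<omega> i - Mn 1 \<omega> i)\<^sup>2 + 2 * (Mn 1 \<omega> i)\<^sup>2)"
    proof (intro AE_I2)
      fix \<omega>
      have "(L \<omega> i)\<^sup>2 \<le> 2 * (L \<omega> i - Mn 1 \<omega> i)\<^sup>2 + 2 * (Mn 1 \<omega> i)\<^sup>2"
        by (rule sq_le2)
      then show "norm ((L \<omega> i)\<^sup>2) \<le> norm (2 * (L \<omega> i - Mn 1 \<omega> i)\<^sup>2 + 2 * (Mn 1 \<omega> i)\<^sup>2)" by simp
    qed
  qed
qed

lemma L_int: "i < d \<Longrightarrow> integrable M (\<lambda>\<omega>. L \<omega> i)"
  using prod_int[OF L2_int[of i], of "\<lambda>_. 1"] Lm[of i] by simp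

lemma LL_int: "i < d \<Longrightarrow> j < d \<Longrightarrow> integrable M (\<lambda>\<omega>. L \<omega> i * L \<omega> j)"
  by (rule prod_int[OF L2_int L2_int Lm Lm])

lemma mean_L: "i < d \<Longrightarrow> (\<integral>\<omega>. L \<omega> i \<partial>M) = 0"
proof -
  assume i: "i < d"
  note [measurable] = pos_meas Lm[OF i]
  have "(\<lambda>n. \<integral>\<omega>. (L \<omega> i - Mn (Suc n) \<omega> i) * 1 \<partial>M) \<longlonglongrightarrow> 0"
  proof (rule int_prod_to_0[where C = 1])
    show "\<And>n. integrable M (\<lambda>\<omega>. (L \<omega> i - Mn (Suc n) \<omega> i)\<^sup>2)" using fatou(1)[OF i] by simp
    show "\<And>n. integrable M (\<lambda>\<omega>. (1::real)\<^sup>2)" by simp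
    show "\<And>n. integrable M (\<lambda>\<omega>. (L \<omega> i - Mn (Suc n) \<omega> i) * 1)" using L_int[OF i] M_int by simp
    show "(\<lambda>n. \<integral>\<omega>. (L \<omega> i - Mn (Suc n) \<omega> i)\<^sup>2 \<partial>M) \<longlonglongrightarrow> 0" by (rule e_lim[OF i])
    show "\<And>n. (\<integral>\<omega>. (1::real)\<^sup>2 \<partial>M) \<le> 1" by simp
  qed
  moreover have "(\<integral>\<omega>. (L \<omega> i - Mn (Suc n) \<omega> i) * 1 \<partial>M) = (\<integral>\<omega>. L \<omega> i \<partial>M)" for n
    using L_int[OF i] pos_int[of "Suc n" i] mean_M[OF i, of "Suc n"] by simp
  ultimately have "(\<lambda>n. \<integral>\<omega>. L \<omega> i \<partial>M) \<longlonglongrightarrow> 0" by simp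
  then show ?thesis by (simp only: LIMSEQ_const_iff)
qed

lemma cov_L:
  assumes i: "i < d" and j: "j < d"
  shows "(\<integral>\<omega>. L \<omega> i * L \<omega> j \<partial>M) = (if i = j then Wl / real d else 0)"
proof -
  note [measurable] = pos_meas Lm[OF i] Lm[OF j]
  obtain K where K: "\<And>n. norm (W n) \<le> K"
    using BseqE[OF convergent_imp_Bseq[OF convergentI[OF W_tendsto]]] by metis
  have MM: "(\<integral>\<omega>. Mn n \<omega> k * Mn n \<omega> l \<partial>M) = (if k = l then W n / real d else 0)"
    if n: "n \<ge> 1" and kl: "k < d" "l < d" for n k l
  proof -
    have "(\<integral>\<omega>. Mn n \<omega> k * Mn n \<omega> l \<partial>M) = (Bf (aa d p) n)\<^sup>2 * (\<integral>\<omega>. merw_pos X n \<omega> k * merw_pos X n \<omega> l \<partial>M)"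
    proof -
      have "(\<lambda>\<omega>. Mn n \<omega> k * Mn n \<omega> l) = (\<lambda>\<omega>. (Bf (aa d p) n)\<^sup>2 * (merw_pos X n \<omega> k * merw_pos X n \<omega> l))"
        by (rule ext) (simp add: power2_eq_square algebra_simps)
      then show ?thesis by simp
    qed
    then show ?thesis using Q_M[OF kl n] by simp
  qed
  have A: "(\<lambda>n. \<integral>\<omega>. Mn (Suc n) \<omega> i * Mn (Suc n) \<omega> j \<partial>M) \<longlonglongrightarrow> (if i = j then Wl / real d else 0)"
  proof (cases "i = j")
    case True
    have "(\<lambda>n. W (Suc n) / real d) \<longlonglongrightarrow> Wl / real d" by (intro tendsto_intros LIMSEQ_Suc[OF W_tendsto] dn)
    then show ?thesis using MM[OF _ i j] True by simp
  next
    case False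
    then show ?thesis using MM[OF _ i j] by simp
  qed
  have B: "(\<lambda>n. \<integral>\<omega>. (L \<omega> i - Mn (Suc n) \<omega> i) * L \<omega> j \<partial>M) \<longlonglongrightarrow> 0"
  proof (rule int_prod_to_0[where C = "\<integral>\<omega>. (L \<omega> j)\<^sup>2 \<partial>M"])
    show "\<And>n. integrable M (\<lambda>\<omega>. (L \<omega> i - Mn (Suc n) \<omega> i)\<^sup>2)" using fatou(1)[OF i] by simp
    show "\<And>n. integrable M (\<lambda>\<omega>. (L \<omega> j)\<^sup>2)" by (rule L2_int[OF j])
    show "\<And>n. integrable M (\<lambda>\<omega>. (L \<omega> i - Mn (Suc n) \<omega> i) * L \<omega> j)"
      using fatou(1)[OF i] L2_int[OF j] by (intro prod_int) auto
    show "(\<lambda>n. \<integral>\<omega>. (L \<omega> i - Mn (Suc n) \<omega> i)\<^sup>2 \<partial>M) \<longlonglongrightarrow> 0" by (rule e_lim[OF i])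
  qed simp
  have C: "(\<lambda>n. \<integral>\<omega>. (L \<omega> j - Mn (Suc n) \<omega> j) * Mn (Suc n) \<omega> i \<partial>M) \<longlonglongrightarrow> 0"
  proof (rule int_prod_to_0[where C = "K / real d"])
    show "\<And>n. integrable M (\<lambda>\<omega>. (L \<omega> j - Mn (Suc n) \<omega> j)\<^sup>2)" using fatou(1)[OF j] by simp
    show "\<And>n. integrable M (\<lambda>\<omega>. (Mn (Suc n) \<omega> i)\<^sup>2)" by (rule M2_int)
    show "\<And>n. integrable M (\<lambda>\<omega>. (L \<omega> j - Mn (Suc n) \<omega> j) * Mn (Suc n) \<omega> i)"
      using fatou(1)[OF j] M2_int by (intro prod_int) auto
    show "(\<lambda>n. \<integral>\<omega>. (L \<omega> j - Mn (Suc n) \<omega> j)\<^sup>2 \<partial>M) \<longlonglongrightarrow> 0" by (rule e_lim[OF j])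
    show "(\<integral>\<omega>. (Mn (Suc n) \<omega> i)\<^sup>2 \<partial>M) \<le> K / real d" for n
    proof -
      have "(\<integral>\<omega>. (Mn (Suc n) \<omega> i)\<^sup>2 \<partial>M) = W (Suc n) / real d"
        using MM[of "Suc n" i i] i by (simp add: power2_eq_square)
      also have "\<dots> \<le> K / real d" using K[of "Suc n"] d by (intro divide_right_mono) auto
      finally show ?thesis .
    qed
  qed
  have sum: "(\<integral>\<omega>. L \<omega> i * L \<omega> j \<partial>M) = (\<integral>\<omega>. Mn (Suc n) \<omega> i * Mn (Suc n) \<omega> j \<partial>M)
      + (\<integral>\<omega>. (L \<omega> i - Mn (Suc n) \<omega> i) * L \<omega> j \<partial>M) + (\<integral>\<omega>. (L \<omega> j - Mn (Suc n) \<omega> j) * Mn (Suc n) \<omega> i \<partial>M)" for n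
  proof -
    have i1: "integrable M (\<lambda>\<omega>. Mn (Suc n) \<omega> i * Mn (Suc n) \<omega> j)"
      using M2_int by (intro prod_int) auto
    have i2: "integrable M (\<lambda>\<omega>. (L \<omega> i - Mn (Suc n) \<omega> i) * L \<omega> j)"
      using fatou(1)[OF i] L2_int[OF j] by (intro prod_int) auto
    have i3: "integrable M (\<lambda>\<omega>. (L \<omega> j - Mn (Suc n) \<omega> j) * Mn (Suc n) \<omega> i)"
      using fatou(1)[OF j] M2_int by (intro prod_int) auto
    have "(\<integral>\<omega>. L \<omega> i * L \<omega> j \<partial>M) = (\<integral>\<omega>. Mn (Suc n) \<omega> i * Mn (Suc n) \<omega> j
        + (L \<omega> i - Mn (Suc n) \<omega> i) * L \<omega> j + (L \<omega> j - Mn (Suc n) \<omega> j) * Mn (Suc n) \<omega> i \<partial>M)"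
      by (rule arg_cong[where f = "integral\<^sup>L M"], rule ext) (simp add: algebra_simps)
    also have "\<dots> = (\<integral>\<omega>. Mn (Suc n) \<omega> i * Mn (Suc n) \<omega> j \<partial>M)
      + (\<integral>\<omega>. (L \<omega> i - Mn (Suc n) \<omega> i) * L \<omega> j \<partial>M) + (\<integral>\<omega>. (L \<omega> j - Mn (Suc n) \<omega> j) * Mn (Suc n) \<omega> i \<partial>M)"
      using i1 i2 i3 by simp
    finally show ?thesis .
  qed
  have "(\<lambda>n. (\<integral>\<omega>. Mn (Suc n) \<omega> i * Mn (Suc n) \<omega> j \<partial>M)
      + (\<integral>\<omega>. (L \<omega> i - Mn (Suc n) \<omega> i) * L \<omega> j \<partial>M) + (\<integral>\<omega>. (L \<omega> j - Mn (Suc n) \<omega> j) * Mn (Suc n) \<omega> i \<partial>M))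
      \<longlonglongrightarrow> (if i = j then Wl / real d else 0) + 0 + 0"
    by (intro tendsto_add A B C)
  then have "(\<lambda>n. \<integral>\<omega>. L \<omega> i * L \<omega> j \<partial>M) \<longlonglongrightarrow> (if i = j then Wl / real d else 0)"
    by (simp only: sum[symmetric]) simp
  then show ?thesis by (simp only: LIMSEQ_const_iff)
qed

end

theorem theorem3p8:
  fixes M :: "'a measure" and d :: nat and p a :: real
    and X :: "nat \<Rightarrow> 'a \<Rightarrow> nat \<Rightarrow> real" and L :: "'a \<Rightarrow> nat \<Rightarrow> real"
  assumes "prob_space M"
    and "d \<ge> 1"
    and "(2 * real d + 1) / (4 * real d) < p" and "p \<le> 1"
    and "is_MERW M d p X"
    and "a = (2 * real d * p - 1) / (2 * real d - 1)"
    and "\<forall>i<d. (\<lambda>\<omega>. L \<omega> i) \<in> borel_measurable M"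
    and "AE \<omega> in M. \<forall>i<d.
           (\<lambda>n. real n powr (- a) * merw_pos X n \<omega> i) \<longlonglongrightarrow> L \<omega> i"
  shows "(\<forall>i<d. integrable M (\<lambda>\<omega>. L \<omega> i) \<and> (\<integral>\<omega>. L \<omega> i \<partial>M) = 0)
       \<and> (\<forall>i<d. \<forall>j<d. integrable M (\<lambda>\<omega>. L \<omega> i * L \<omega> j)
            \<and> (\<integral>\<omega>. L \<omega> i * L \<omega> j \<partial>M)
                = (if i = j then 1 / (real d * (2 * a - 1) * Gamma (2 * a)) else 0))
       \<and> (\<integral>\<omega>. (\<Sum>i<d. (L \<omega> i)\<^sup>2) \<partial>M) = 1 / ((2 * a - 1) * Gamma (2 * a))"
proof -
  have PS: "prob_space M" and d1: "d \<ge> 1" and p1: "p \<le> 1" and MERW: "is_MERW M d p X"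
    using assms by auto
  have dpos: "real d > 0" using d1 by simp
  have "(2 * real d + 1) / (4 * real d) > 0" using dpos by simp
  then have p0: "0 \<le> p" using assms(3) by linarith
  have ahalf: "aa d p > 1/2"
  proof -
    have "2 * real d + 1 < 4 * real d * p"
      using assms(3) dpos by (simp add: field_simps)
    moreover have "2 * real d - 1 > 0" using d1 by simp
    ultimately show ?thesis by (simp add: aa_def[OF d1 p0 p1] field_simps)
  qed
  have aeq: "a = aa d p" using assms(6) by (simp add: aa_def[OF d1 p0 p1])
  interpret mctxL M d p X L
    using PS d1 p0 p1 ahalf MERW assms(7) assms(8)[unfolded aeq]
    by (simp add: mctxL_def mctx_def mctx_axioms_def mctxL_axioms_def)
  have Wd: "Wl / real d = 1 / (real d * (2 * a - 1) * Gamma (2 * a))"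
    unfolding aeq by (simp add: field_simps)
  have c1: "\<forall>i<d. integrable M (\<lambda>\<omega>. L \<omega> i) \<and> (\<integral>\<omega>. L \<omega> i \<partial>M) = 0"
    using L_int mean_L by blast
  have c2: "\<forall>i<d. \<forall>j<d. integrable M (\<lambda>\<omega>. L \<omega> i * L \<omega> j)
            \<and> (\<integral>\<omega>. L \<omega> i * L \<omega> j \<partial>M)
                = (if i = j then 1 / (real d * (2 * a - 1) * Gamma (2 * a)) else 0)"
    using LL_int cov_L Wd by (simp add: aeq)
  have "(\<integral>\<omega>. (\<Sum>i<d. (L \<omega> i)\<^sup>2) \<partial>M) = (\<Sum>i<d. (\<integral>\<omega>. (L \<omega> i)\<^sup>2 \<partial>M))"
    by (rule Bochner_Integration.integral_sum) (simp add: L2_int)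
  also have "\<dots> = (\<Sum>i<d. Wl / real d)"
  proof (rule sum.cong)
    fix i assume "i \<in> {..<d}"
    then have i: "i < d" by simp
    show "(\<integral>\<omega>. (L \<omega> i)\<^sup>2 \<partial>M) = Wl / real d"
      using cov_L[OF i i] by (simp add: power2_eq_square)
  qed simp
  also have "\<dots> = 1 / ((2 * a - 1) * Gamma (2 * a))"
    using dpos unfolding aeq by simp
  finally have c3: "(\<integral>\<omega>. (\<Sum>i<d. (L \<omega> i)\<^sup>2) \<partial>M) = 1 / ((2 * a - 1) * Gamma (2 * a))" .
  show ?thesis using c1 c2 c3 by blast
qed

end
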